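(* Let $\Delta t>0$ be fixed and consider a diagonally implicit, globally stiffly accurate (GSA) $s$-stage IMEX-RK scheme that is either of type A or of type CK, applied to the isentropic Euler system on $\mathbb{T}^d$ in the time semi-discrete form below. Suppose the data at time $t^n$ are well prepared, i.e. $$\rho^n=\rho^n_{(0)}+\varepsilon^2\rho^n_{(2)},\qquad \mathbf{u}^n=\mathbf{u}^n_{(0)}+\varepsilon\mathbf{u}^n_{(1)},$$ with $\rho^n_{(0)}>0$, $\rho^n_{(2)}$, $\mathbf{u}^n_{(0)}$, $\mathbf{u}^n_{(1)}$ smooth and independent of $\varepsilon$, $\nabla\rho^n_{(0)}=0$ and $\nabla\cdot\mathbf{u}^n_{(0)}=0$, and put $\mathbf{q}^n=\rho^n\mathbf{u}^n$. Suppose that for all sufficiently small $\varepsilon>0$ the stage values $\rho^k,\mathbf{q}^k$ ($k=1,\dots,s$) exist, are positive in density, and admit expansions $$f=f_{(0)}+\varepsilon f_{(1)}+\varepsilon^2 f_{(2)}+r_\varepsilon,$$ with coefficients $f_{(i)}$ smooth and independent of $\varepsilon$ and $r_\varepsilon=o(\varepsilon^2)$ in $C^1(\mathbb{T}^d)$ as $\varepsilon\to0$ (for $f\in\{\rho^k,\mathbf{u}^k\}$, $\mathbf{u}^k=\mathbf{q}^k/\rho^k$). Then for every $k=1,\dots,s$: (i) $\rho^k_{(0)}=\rho^n_{(0)}$ (in particular spatially constant) and $\rho^k_{(1)}$ is spatially constant; (ii) $\nabla\cdot\mathbf{u}^k_{(0)}=0$. Consequently $(\rho^{n+1},\mathbf{u}^{n+1})=(\rho^s,\mathbf{u}^s)$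 is again well prepared: $\rho^{n+1}_{(0)}=\rho^n_{(0)}$ is constant and $\nabla\cdot\mathbf{u}^{n+1}_{(0)}=0$. Moreover the leading order velocity satisfies $$\mathbf{u}^{n+1}_{(0)}=\mathbf{u}^n_{(0)}-\Delta t\sum_{k=1}^s\tilde\omega_k\nabla\cdot\big(\mathbf{u}^k_{(0)}\otimes\mathbf{u}^k_{(0)}\big)-\frac{\Delta t}{\rho^n_{(0)}}\sum_{k=1}^s\omega_k\nabla p^k_{(2)},\qquad \nabla\cdot \mathbf{u}^{n+1}_{(0)}=0,$$ where $p^k_{(2)}$ denotes the $\varepsilon^2$-coefficient in the expansion of $p(\rho^k)$, i.e. the limit scheme is a time discretisation of the incompressible Euler system $\partial_t\mathbf{u}+\nabla\cdot(\mathbf{u}\otimes\mathbf{u})+\nabla \pi=0$, $\nabla\cdot\mathbf{u}=0$.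
   Context: Isentropic Euler system (scaled): $\partial_t\rho+\nabla\cdot(\rho\mathbf{u})=0$, $\partial_t(\rho\mathbf{u})+\nabla\cdot(\rho\mathbf{u}\otimes\mathbf{u})+\varepsilon^{-2}\nabla p(\rho)=0$ on the torus $\mathbb{T}^d$ (periodic boundary conditions), with $p(\rho)=\rho^\gamma$, $\gamma>0$, and Mach number parameter $\varepsilon>0$; $\mathbf{q}=\rho\mathbf{u}$. IMEX-RK scheme: real matrices $\tilde A=(\tilde a_{k,j}),A=(a_{k,j})\in\mathbb{R}^{s\times s}$ and weights $\tilde\omega,\omega\in\mathbb{R}^s$, with $\tilde a_{k,j}=0$ for $j\ge k$ and $a_{k,j}=0$ for $j>k$ (diagonally implicit). It is GSA if $\tilde a_{s,j}=\tilde\omega_j$ and $a_{s,j}=\omega_j$ for all $j$. It is of type A if $A$ is invertible (i.e. $a_{k,k}\neq0$ for all $k$), and of type CK if $s\ge2$, the first row of $A$ is zero and the lower right $(s-1)\times(s-1)$ block of $A$ is invertible. Time semi-discrete scheme: for $k=1,\dots,s$, $\rho^k=\rho^n-\Delta t\sum_{l=1}^{k}a_{k,l}\nabla\cdot\mathbf{q}^l$, $\mathbf{q}^k=\mathbf{q}^n-\Delta t\sum_{\ell=1}^{k-1}\tilde a_{k,\ell}\nabla\cdot\big(\mathbf{q}^\ell\otimes\mathbf{q}^\ell/\rho^\ell\big)-\frac{\Delta t}{\varepsilon^2}\sum_{l=1}^k a_{k,l}\nabla p(\rho^l)$, and $\rho^{n+1}=\rho^n-\Delta t\sum_k\omega_k\nabla\cdot\mathbf{q}^k$,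 $\mathbf{q}^{n+1}=\mathbf{q}^n-\Delta t\sum_k\tilde\omega_k\nabla\cdot(\mathbf{q}^k\otimes\mathbf{q}^k/\rho^k)-\frac{\Delta t}{\varepsilon^2}\sum_k\omega_k\nabla p(\rho^k)$; for a GSA scheme $(\rho^{n+1},\mathbf{q}^{n+1})=(\rho^s,\mathbf{q}^s)$. *)

theory Defs
  imports "HOL-Analysis.Analysis"
begin

text \<open>Functions on the torus T^d = R^d / Z^d are modelled as functions on real^'d
  that are 1-periodic in every coordinate direction.\<close>

definition periodic_torus :: "(real^'d \<Rightarrow> 'b) \<Rightarrow> bool" where
  "periodic_torus f \<longleftrightarrow> (\<forall>x i. f (x + axis i 1) = f x)"

definition pd :: "'d::finite \<Rightarrow> (real^'d \<Rightarrow> 'b::real_normed_vector) \<Rightarrow> real^'d \<Rightarrow> 'b" where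
  "pd i f x = frechet_derivative f (at x) (axis i 1)"

fun pdl :: "'d::finite list \<Rightarrow> (real^'d \<Rightarrow> 'b::real_normed_vector) \<Rightarrow> real^'d \<Rightarrow> 'b" where
  "pdl [] f = f"
| "pdl (i # is) f = pd i (pdl is f)"

definition smooth_fun :: "(real^'d::finite \<Rightarrow> 'b::real_normed_vector) \<Rightarrow> bool" where
  "smooth_fun f \<longleftrightarrow> (\<forall>is x. pdl is f differentiable (at x))"

definition C1_fun :: "(real^'d::finite \<Rightarrow> 'b::real_normed_vector) \<Rightarrow> bool" where
  "C1_fun f \<longleftrightarrow> (\<forall>x. f differentiable (at x)) \<and> (\<forall>i. continuous_on UNIV (pd i f))"

definition grad :: "(real^'d::finite \<Rightarrow> real) \<Rightarrow> real^'d \<Rightarrow> real^'d" where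
  "grad f x = (\<chi> i. pd i f x)"

definition dive :: "(real^'d::finite \<Rightarrow> real^'d) \<Rightarrow> real^'d \<Rightarrow> real" where
  "dive q x = (\<Sum>i\<in>UNIV. pd i (\<lambda>y. q y $ i) x)"

definition divT :: "(real^'d::finite \<Rightarrow> 'd \<Rightarrow> 'd \<Rightarrow> real) \<Rightarrow> real^'d \<Rightarrow> real^'d" where
  "divT T x = (\<chi> j. \<Sum>i\<in>UNIV. pd i (\<lambda>y. T y i j) x)"

definition otimes :: "real^'d \<Rightarrow> real^'d \<Rightarrow> 'd \<Rightarrow> 'd \<Rightarrow> real" where
  "otimes a b i j = a $ i * b $ j"

text \<open>Asymptotic expansion F eps = f0 + eps f1 + eps^2 f2 + r_eps with r_eps = o(eps^2)
  in C^1(T^d) as eps \<rightarrow> 0+ (the C^1 norm being sup |r| + sum_i sup |d_i r|).\<close>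
definition expansion ::
  "(real \<Rightarrow> real^'d::finite \<Rightarrow> 'b::real_normed_vector) \<Rightarrow> (real^'d \<Rightarrow> 'b) \<Rightarrow> (real^'d \<Rightarrow> 'b) \<Rightarrow> (real^'d \<Rightarrow> 'b) \<Rightarrow> bool" where
  "expansion F f0 f1 f2 \<longleftrightarrow>
     (let r = (\<lambda>\<epsilon> x. F \<epsilon> x - (f0 x + \<epsilon> *\<^sub>R f1 x + \<epsilon>\<^sup>2 *\<^sub>R f2 x)) in
       (\<forall>\<^sub>F \<epsilon> in at_right 0. C1_fun (r \<epsilon>)) \<and>
       (\<forall>e>0. \<forall>\<^sub>F \<epsilon> in at_right 0.
           \<forall>x. norm (r \<epsilon> x) \<le> e * \<epsilon>\<^sup>2 \<and> (\<forall>i. norm (pd i (r \<epsilon>) x) \<le> e * \<epsilon>\<^sup>2)))"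

definition invertible_block :: "(nat \<Rightarrow> nat \<Rightarrow> real) \<Rightarrow> nat \<Rightarrow> nat \<Rightarrow> bool" where
  "invertible_block M lo hi \<longleftrightarrow> (\<exists>B. \<forall>i\<in>{lo..hi}. \<forall>j\<in>{lo..hi}.
      (\<Sum>l\<in>{lo..hi}. B i l * M l j) = (if i = j then 1 else 0) \<and>
      (\<Sum>l\<in>{lo..hi}. M i l * B l j) = (if i = j then 1 else 0))"

text \<open>IMEX-RK scheme with s stages, matrices At (explicit, tilde A) and A (implicit),
  weights wt (tilde omega) and w (omega), all indexed from 1.\<close>
definition DIRK_IMEX :: "nat \<Rightarrow> (nat \<Rightarrow> nat \<Rightarrow> real) \<Rightarrow> (nat \<Rightarrow> nat \<Rightarrow> real) \<Rightarrow> bool" where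
  "DIRK_IMEX s At A \<longleftrightarrow> s \<ge> 1 \<and>
     (\<forall>k\<in>{1..s}. \<forall>j\<in>{1..s}. j \<ge> k \<longrightarrow> At k j = 0) \<and>
     (\<forall>k\<in>{1..s}. \<forall>j\<in>{1..s}. j > k \<longrightarrow> A k j = 0)"

definition GSA :: "nat \<Rightarrow> (nat \<Rightarrow> nat \<Rightarrow> real) \<Rightarrow> (nat \<Rightarrow> nat \<Rightarrow> real) \<Rightarrow> (nat \<Rightarrow> real) \<Rightarrow> (nat \<Rightarrow> real) \<Rightarrow> bool" where
  "GSA s At A wt w \<longleftrightarrow> (\<forall>j\<in>{1..s}. At s j = wt j \<and> A s j = w j)"

definition type_A :: "nat \<Rightarrow> (nat \<Rightarrow> nat \<Rightarrow> real) \<Rightarrow> bool" where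
  "type_A s A \<longleftrightarrow> invertible_block A 1 s"

definition type_CK :: "nat \<Rightarrow> (nat \<Rightarrow> nat \<Rightarrow> real) \<Rightarrow> bool" where
  "type_CK s A \<longleftrightarrow> s \<ge> 2 \<and> (\<forall>j\<in>{1..s}. A 1 j = 0) \<and> invertible_block A 2 s"

text \<open>Pressure p(rho) = rho^gamma, and the eps^2-coefficient of p(rho) for
  rho = r0 + eps r1 + eps^2 r2 + o(eps^2), r0 > 0:
  p'(r0) r2 + p''(r0)/2 r1^2.\<close>
definition pres :: "real \<Rightarrow> real \<Rightarrow> real" where
  "pres \<gamma> r = r powr \<gamma>"

definition pres2 :: "real \<Rightarrow> real \<Rightarrow> real \<Rightarrow> real \<Rightarrow> real" where
  "pres2 \<gamma> r0 r1 r2 = \<gamma> * r0 powr (\<gamma> - 1) * r2 + \<gamma> * (\<gamma> - 1) / 2 * r0 powr (\<gamma> - 2) * r1\<^sup>2"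

end

theory Submission
  imports Defs
begin


lemma pd_eq: "(f has_derivative D) (at x) \<Longrightarrow> pd i f x = D (axis i 1)"
  unfolding pd_def using frechet_derivative_at by metis

lemma fdw: "f differentiable at x \<Longrightarrow> (f has_derivative frechet_derivative f (at x)) (at x)"
  using frechet_derivative_works by blast

lemma pd_add:
  assumes "f differentiable at x" "g differentiable at x"
  shows "pd i (\<lambda>y. f y + g y) x = pd i f x + pd i g x"
  using pd_eq[OF has_derivative_add[OF fdw[OF assms(1)] fdw[OF assms(2)]], of i] by (simp only: pd_def)

lemma pd_diff:
  assumes "f differentiable at x" "g differentiable at x"
  shows "pd i (\<lambda>y. f y - g y) x = pd i f x - pd i g x"
  using pd_eq[OF has_derivative_diff[OF fdw[OF assms(1)] fdw[OF assms(2)]], of i] by (simp only: pd_def)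

lemma pd_mult:
  fixes f g :: "real^'d::finite \<Rightarrow> real"
  assumes "f differentiable at x" "g differentiable at x"
  shows "pd i (\<lambda>y. f y * g y) x = f x * pd i g x + pd i f x * g x"
  using pd_eq[OF has_derivative_mult[OF fdw[OF assms(1)] fdw[OF assms(2)]], of i] by (simp only: pd_def)

lemma pd_scaleR:
  fixes f :: "real^'d::finite \<Rightarrow> real" and g :: "real^'d \<Rightarrow> 'b::real_normed_vector"
  assumes "f differentiable at x" "g differentiable at x"
  shows "pd i (\<lambda>y. f y *\<^sub>R g y) x = f x *\<^sub>R pd i g x + pd i f x *\<^sub>R g x"
  using pd_eq[OF has_derivative_scaleR[OF fdw[OF assms(1)] fdw[OF assms(2)]], of i] by (simp only: pd_def)

lemma pd_cmult:
  fixes f :: "real^'d::finite \<Rightarrow> real"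
  assumes "f differentiable at x"
  shows "pd i (\<lambda>y. c * f y) x = c * pd i f x"
  using pd_eq[OF has_derivative_mult_right[OF fdw[OF assms(1)]], of i] by (simp only: pd_def)

lemma pd_cscale:
  fixes f :: "real^'d::finite \<Rightarrow> 'b::real_normed_vector"
  assumes "f differentiable at x"
  shows "pd i (\<lambda>y. c *\<^sub>R f y) x = c *\<^sub>R pd i f x"
  using pd_eq[OF has_derivative_scaleR_right[OF fdw[OF assms(1)]], of i] by (simp only: pd_def)

lemma pd_const: "pd i (\<lambda>y. c) x = 0"
  using pd_eq[OF has_derivative_const, of i c x] by simp

lemma pd_nth:
  fixes f :: "real^'d::finite \<Rightarrow> real^'e::finite"
  assumes "f differentiable at x"
  shows "pd i (\<lambda>y. f y $ j) x = pd i f x $ j"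
  using pd_eq[OF bounded_linear.has_derivative[OF bounded_linear_vec_nth fdw[OF assms]], of i] by (simp only: pd_def)

lemma diff_nth:
  fixes f :: "real^'d::finite \<Rightarrow> real^'e::finite"
  assumes "f differentiable at x"
  shows "(\<lambda>y. f y $ j) differentiable at x"
  using bounded_linear.has_derivative[OF bounded_linear_vec_nth fdw[OF assms]]
  by (auto simp: differentiable_def)

lemma pd_powr:
  fixes f :: "real^'d::finite \<Rightarrow> real"
  assumes "f differentiable at x" "f x > 0"
  shows "pd i (\<lambda>y. f y powr g) x = g * f x powr (g - 1) * pd i f x"
proof -
  have d: "((\<lambda>z. z powr g) has_derivative (\<lambda>h. (g * f x powr (g - 1)) * h)) (at (f x))"
    using has_real_derivative_powr[OF assms(2), of g] by (simp add: has_field_derivative_def)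
  have "((\<lambda>y. f y powr g) has_derivative (\<lambda>h. (g * f x powr (g - 1)) * frechet_derivative f (at x) h)) (at x)"
    using has_derivative_compose[OF fdw[OF assms(1)] d] by simp
  from pd_eq[OF this, of i] show ?thesis by (simp only: pd_def)
qed

lemma diff_powr:
  fixes f :: "real^'d::finite \<Rightarrow> real"
  assumes "f differentiable at x" "f x > 0"
  shows "(\<lambda>y. f y powr g) differentiable at x"
proof -
  have d: "((\<lambda>z. z powr g) has_derivative (\<lambda>h. (g * f x powr (g - 1)) * h)) (at (f x))"
    using has_real_derivative_powr[OF assms(2), of g] by (simp add: has_field_derivative_def)
  show ?thesis
    using has_derivative_compose[OF fdw[OF assms(1)] d] by (auto simp: differentiable_def)
qed



lemma shift_deriv:
  fixes v :: "real^'d::finite \<Rightarrow> real^'d"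
  assumes diff: "\<And>x. v differentiable at x"
  shows "((\<lambda>t. v (p + t *\<^sub>R axis i 1) $ i) has_derivative
          (\<lambda>s. s * pd i (\<lambda>z. v z $ i) (p + t *\<^sub>R axis i 1))) (at t within S)"
proof -
  let ?z = "p + t *\<^sub>R axis i 1"
  let ?D = "frechet_derivative (\<lambda>z. v z $ i) (at ?z)"
  have d1: "((\<lambda>z. v z $ i) has_derivative ?D) (at ?z)"
    using fdw[OF diff_nth[OF diff]] by blast
  have d2: "((\<lambda>t. p + t *\<^sub>R axis i 1) has_derivative (\<lambda>s. s *\<^sub>R axis i 1)) (at t within S)"
    by (auto intro!: derivative_eq_intros)
  have "((\<lambda>t. v (p + t *\<^sub>R axis i 1) $ i) has_derivative (\<lambda>s. ?D (s *\<^sub>R axis i 1))) (at t within S)"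
    using has_derivative_compose[OF d2 has_derivative_at_withinI[OF d1]] by (simp add: o_def)
  moreover have "?D (s *\<^sub>R axis i 1) = s * pd i (\<lambda>z. v z $ i) ?z" for s
  proof -
    have "linear ?D" using d1 has_derivative_linear by blast
    then show ?thesis by (simp add: pd_def linear_scale)
  qed
  ultimately show ?thesis by simp
qed

lemma div_const_zero:
  fixes v :: "real^'d::finite \<Rightarrow> real^'d"
  assumes diff: "\<And>x. v differentiable at x"
    and cont: "\<And>i. continuous_on UNIV (\<lambda>y. pd i (\<lambda>z. v z $ i) y)"
    and per: "periodic_torus v"
    and K: "\<And>x. dive v x = K"
  shows "K = 0"
proof (rule ccontr)
  assume K0: "K \<noteq> 0"
  define e where "e = \<bar>K\<bar> / (2 * real CARD('d))"
  have e0: "e > 0" using K0 by (simp add: e_def)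
  define g where "g y = (\<chi> i. pd i (\<lambda>z. v z $ i) y)" for y
  have "continuous_on UNIV g" unfolding g_def by (intro continuous_on_vec_lambda cont)
  then have "uniformly_continuous_on (cbox 0 1) g"
    by (intro compact_uniformly_continuous) (auto intro: continuous_on_subset)
  then obtain \<delta> where d0: "\<delta> > 0"
    and dU: "\<And>y z. y \<in> cbox 0 1 \<Longrightarrow> z \<in> cbox 0 1 \<Longrightarrow> dist z y < \<delta> \<Longrightarrow> dist (g z) (g y) < e"
    unfolding uniformly_continuous_on_def using e0 by metis
  obtain n :: nat where n: "inverse (real (Suc n)) < \<delta>" using reals_Archimedean d0 by blast
  define N where "N = Suc n"
  have N0: "N > 0" by (simp add: N_def)
  define h where "h = 1 / real N"
  have h0: "h > 0" and hd: "h < \<delta>" using n by (auto simp: h_def N_def field_simps)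
  define Gr where "Gr = {m :: 'd \<Rightarrow> nat. \<forall>j. m j < N}"
  have Gr_eq: "Gr = PiE UNIV (\<lambda>_. {..<N})" by (auto simp: Gr_def PiE_def extensional_def)
  have finGr: "finite Gr" unfolding Gr_eq by (intro finite_PiE) auto
  have GrNE: "(\<lambda>_. 0) \<in> Gr" using N0 by (simp add: Gr_def)
  have cardGr: "card Gr > 0" using finGr GrNE card_gt_0_iff by blast
  define pt where "pt m = (\<chi> j. real (m j) / real N)" for m :: "'d \<Rightarrow> nat"
  have pt_le: "real (m j) / real N \<le> 1" if "m \<in> Gr" for m j
      using that N0 by (simp add: Gr_def divide_le_eq_1 less_imp_le)
  have pt_in: "pt m \<in> cbox 0 1" if "m \<in> Gr" for m
    using pt_le[OF that] by (auto simp: mem_box_cart pt_def)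
  have est: "\<bar>g (pt m) $ i - real N * (v (pt m + h *\<^sub>R axis i 1) $ i - v (pt m) $ i)\<bar> < e"
    if m: "m \<in> Gr" for m i
  proof -
    have "\<exists>x\<in>{0<..<h}. v (pt m + h *\<^sub>R axis i 1) $ i - v (pt m + 0 *\<^sub>R axis i 1) $ i
          = (h - 0) * pd i (\<lambda>z. v z $ i) (pt m + x *\<^sub>R axis i 1)"
      by (rule mvt_simple[OF h0 shift_deriv[OF diff]])
    then obtain \<xi> where \<xi>: "0 < \<xi>" "\<xi> < h"
      and eq: "v (pt m + h *\<^sub>R axis i 1) $ i - v (pt m) $ i = h * pd i (\<lambda>z. v z $ i) (pt m + \<xi> *\<^sub>R axis i 1)"
      by auto
    have "real N * (v (pt m + h *\<^sub>R axis i 1) $ i - v (pt m) $ i) = g (pt m + \<xi> *\<^sub>R axis i 1) $ i"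
      using eq N0 by (simp add: h_def g_def)
    moreover have "pt m + \<xi> *\<^sub>R axis i 1 \<in> cbox 0 1"
    proof -
      have "real (m i) / real N + \<xi> \<le> 1"
      proof -
        have "m i + 1 \<le> N" using m by (simp add: Gr_def Suc_le_eq)
        then have "real (m i) + 1 \<le> real N" by linarith
        then have "real (m i) / real N + 1 / real N \<le> 1" using N0 by (simp add: field_simps)
        then show ?thesis using \<xi> by (simp add: h_def)
      qed
      then show ?thesis using m \<xi> pt_le[OF m] by (auto simp: mem_box_cart pt_def axis_def)
    qed
    moreover have "dist (pt m + \<xi> *\<^sub>R axis i 1) (pt m) < \<delta>"
      using \<xi> hd by (simp add: dist_norm)
    ultimately have "dist (g (pt m + \<xi> *\<^sub>R axis i 1)) (g (pt m)) < e"
      using dU pt_in[OF m] by blast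
    then have "\<bar>(g (pt m + \<xi> *\<^sub>R axis i 1) - g (pt m)) $ i\<bar> < e"
      using component_le_norm_cart[of "g (pt m + \<xi> *\<^sub>R axis i 1) - g (pt m)" i]
      by (simp add: dist_norm)
    then show ?thesis using \<open>real N * _ = _\<close> by (simp add: abs_minus_commute)
  qed
  have tele: "(\<Sum>m\<in>Gr. v (pt m + h *\<^sub>R axis i 1) $ i) = (\<Sum>m\<in>Gr. v (pt m) $ i)" for i
  proof -
    define \<sigma> where "\<sigma> m = m(i := Suc (m i) mod N)" for m :: "'d \<Rightarrow> nat"
    have sig_in: "\<sigma> ` Gr \<subseteq> Gr" using N0 by (auto simp: \<sigma>_def Gr_def)
    have sig_inj: "inj_on \<sigma> Gr"
    proof (rule inj_onI)
      fix a b assume ab: "a \<in> Gr" "b \<in> Gr" "\<sigma> a = \<sigma> b"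
      then have "Suc (a i) mod N = Suc (b i) mod N" unfolding \<sigma>_def by (metis fun_upd_same)
      moreover have "a i < N" "b i < N" using ab by (auto simp: Gr_def)
      ultimately have "a i = b i"
        by (auto simp: mod_Suc split: if_splits)
      moreover have "a j = b j" if "j \<noteq> i" for j
        using ab(3) that unfolding \<sigma>_def by (metis fun_upd_other)
      ultimately show "a = b" by (metis ext)
    qed
    have sig_eq: "\<sigma> ` Gr = Gr" using endo_inj_surj[OF finGr sig_in sig_inj] .
    have shift: "v (pt m + h *\<^sub>R axis i 1) = v (pt (\<sigma> m))" if m: "m \<in> Gr" for m
    proof (cases "Suc (m i) < N")
      case True
      have "pt m + h *\<^sub>R axis i 1 = pt (\<sigma> m)"
      proof (subst vec_eq_iff, intro allI)
        fix j show "(pt m + h *\<^sub>R axis i 1) $ j = pt (\<sigma> m) $ j"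
          using True N0 by (cases "j = i") (simp_all add: pt_def axis_def h_def \<sigma>_def add_divide_distrib)
      qed
      then show ?thesis by simp
    next
      case False
      then have mi: "Suc (m i) = N" proof -
        have "m i < N" using m by (simp add: Gr_def)
        then show ?thesis using False by linarith
      qed
      have "pt m + h *\<^sub>R axis i 1 = pt (\<sigma> m) + axis i 1"
      proof -
        have 1: "real (m i) / real N + 1 / real N = 1"
        proof -
          have "real (m i) + 1 = real N" using mi by linarith
          then show ?thesis using N0 by (simp add: field_simps)
        qed
        have 2: "\<sigma> m i = 0" using mi by (simp add: \<sigma>_def)
        have 3: "\<sigma> m j = m j" if "j \<noteq> i" for j using that by (simp add: \<sigma>_def)
        show ?thesis
        proof (subst vec_eq_iff, intro allI)
          fix j show "(pt m + h *\<^sub>R axis i 1) $ j = (pt (\<sigma> m) + axis i 1) $ j"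
            by (cases "j = i") (simp_all add: pt_def axis_def h_def 1 2 3)
        qed
      qed
      then show ?thesis using per unfolding periodic_torus_def by simp
    qed
    have "(\<Sum>m\<in>Gr. v (pt m + h *\<^sub>R axis i 1) $ i) = (\<Sum>m\<in>Gr. v (pt (\<sigma> m)) $ i)"
      using shift by (intro sum.cong) auto
    also have "\<dots> = (\<Sum>m\<in>\<sigma> ` Gr. v (pt m) $ i)"
      using sum.reindex[OF sig_inj, of "\<lambda>m. v (pt m) $ i"] by (simp add: o_def)
    also have "\<dots> = (\<Sum>m\<in>Gr. v (pt m) $ i)" using sig_eq by simp
    finally show ?thesis .
  qed
  have S1: "(\<Sum>m\<in>Gr. \<Sum>i\<in>UNIV. g (pt m) $ i) = real (card Gr) * K"
    using K by (simp add: g_def dive_def[symmetric])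
  have S2: "(\<Sum>m\<in>Gr. \<Sum>i\<in>UNIV. real N * (v (pt m + h *\<^sub>R axis i 1) $ i - v (pt m) $ i)) = 0"
  proof -
    have "(\<Sum>m\<in>Gr. \<Sum>i\<in>UNIV. real N * (v (pt m + h *\<^sub>R axis i 1) $ i - v (pt m) $ i))
        = (\<Sum>i\<in>UNIV. real N * ((\<Sum>m\<in>Gr. v (pt m + h *\<^sub>R axis i 1) $ i) - (\<Sum>m\<in>Gr. v (pt m) $ i)))"
      by (subst sum.swap) (simp add: sum_distrib_left sum_subtractf right_diff_distrib)
    also have "\<dots> = 0" using tele by simp
    finally show ?thesis .
  qed
  have "\<bar>real (card Gr) * K\<bar> = \<bar>\<Sum>m\<in>Gr. \<Sum>i\<in>UNIV. (g (pt m) $ i - real N * (v (pt m + h *\<^sub>R axis i 1) $ i - v (pt m) $ i))\<bar>"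
    using S1 S2 by (simp add: sum_subtractf)
  also have "\<dots> \<le> (\<Sum>m\<in>Gr. \<Sum>i\<in>UNIV. \<bar>g (pt m) $ i - real N * (v (pt m + h *\<^sub>R axis i 1) $ i - v (pt m) $ i)\<bar>)"
    by (rule order_trans[OF sum_abs]) (intro sum_mono sum_abs)
  also have "\<dots> \<le> (\<Sum>m\<in>Gr. \<Sum>i\<in>(UNIV::'d set). e)"
    using est by (intro sum_mono less_imp_le) auto
  also have "\<dots> = real (card Gr) * (real CARD('d) * e)" by simp
  also have "\<dots> = real (card Gr) * (\<bar>K\<bar> / 2)" by (simp add: e_def)
  finally have "real (card Gr) * \<bar>K\<bar> \<le> real (card Gr) * (\<bar>K\<bar> / 2)" by (simp add: abs_mult)
  then have "\<bar>K\<bar> \<le> \<bar>K\<bar> / 2" using cardGr by simp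
  then show False using K0 by simp
qed



lemma const_from_pd0:
  fixes f :: "real^'d::finite \<Rightarrow> real"
  assumes d: "\<And>y. f differentiable at y" and z: "\<And>y i. pd i f y = 0"
  shows "\<exists>c. \<forall>y. f y = c"
proof -
  have "(f has_derivative (\<lambda>h. 0)) (at y within UNIV)" for y
  proof -
    let ?D = "frechet_derivative f (at y)"
    have fd: "(f has_derivative ?D) (at y)" using fdw[OF d] .
    have lin: "linear ?D" using fd has_derivative_linear by blast
    have "?D h = 0" for h
    proof -
      have "?D h = ?D (\<Sum>i\<in>UNIV. h $ i *\<^sub>R axis i 1)"
        using basis_expansion[of h] by (simp add: scalar_mult_eq_scaleR)
      also have "\<dots> = (\<Sum>i\<in>UNIV. h $ i * ?D (axis i 1))"
        by (simp add: linear_sum[OF lin] linear_scale[OF lin])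
      also have "\<dots> = 0" using z[unfolded pd_def] by simp
      finally show ?thesis .
    qed
    then have "?D = (\<lambda>h. 0)" by auto
    then show ?thesis using fd by simp
  qed
  then show ?thesis using has_derivative_zero_constant[of UNIV f] by auto
qed

lemma pd_min:
  fixes f :: "real^'d::finite \<Rightarrow> real"
  assumes d: "f differentiable at x" and nn: "\<And>y. f y \<ge> 0" and z: "f x = 0"
  shows "pd i f x = 0"
proof -
  have "frechet_derivative f (at x) = (\<lambda>h. 0)"
    by (rule has_derivative_local_min[OF fdw[OF d]]) (auto simp: z nn)
  then show ?thesis by (simp add: pd_def)
qed

lemma inv_apply:
  fixes g h :: "nat \<Rightarrow> 'a::real_vector"
  assumes B: "\<forall>i\<in>I. \<forall>j\<in>I. (\<Sum>l\<in>I. B i l * M l j) = (if i = j then 1 else 0)"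
    and fin: "finite I"
    and sys: "\<forall>k\<in>I. (\<Sum>l\<in>I. M k l *\<^sub>R g l) = h k" and i: "i \<in> I"
  shows "g i = (\<Sum>k\<in>I. B i k *\<^sub>R h k)"
proof -
  have "(\<Sum>k\<in>I. B i k *\<^sub>R h k) = (\<Sum>k\<in>I. B i k *\<^sub>R (\<Sum>l\<in>I. M k l *\<^sub>R g l))"
    using sys by simp
  also have "\<dots> = (\<Sum>k\<in>I. \<Sum>l\<in>I. (B i k * M k l) *\<^sub>R g l)"
    by (simp add: scaleR_sum_right)
  also have "\<dots> = (\<Sum>l\<in>I. (\<Sum>k\<in>I. B i k * M k l) *\<^sub>R g l)"
    by (subst sum.swap) (simp add: scaleR_sum_left)
  also have "\<dots> = (\<Sum>l\<in>I. (if i = l then 1 else 0) *\<^sub>R g l)"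
    using B i by (intro sum.cong) auto
  also have "\<dots> = (\<Sum>l\<in>I. if i = l then g l else 0)" by (intro sum.cong) auto
  also have "\<dots> = g i" using fin i by simp
  finally show ?thesis by simp
qed

lemma sq_lim:
  fixes G :: "real \<Rightarrow> 'a::real_normed_vector"
  assumes "((\<lambda>\<epsilon>. (1 / \<epsilon>\<^sup>2) *\<^sub>R G \<epsilon>) \<longlongrightarrow> L) (at_right 0)"
  shows "((\<lambda>\<epsilon>. (1 / \<epsilon>) *\<^sub>R G \<epsilon>) \<longlongrightarrow> 0) (at_right 0)" and "(G \<longlongrightarrow> 0) (at_right 0)"
proof -
  have ev: "\<forall>\<^sub>F \<epsilon> in at_right (0::real). \<epsilon> \<noteq> 0"
    using eventually_at_right_less[of "0::real"] by (rule eventually_mono) simp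
  have e0: "((\<lambda>\<epsilon>::real. \<epsilon>) \<longlongrightarrow> 0) (at_right 0)" by (rule tendsto_ident_at)
  have A: "((\<lambda>\<epsilon>. \<epsilon> *\<^sub>R ((1 / \<epsilon>\<^sup>2) *\<^sub>R G \<epsilon>)) \<longlongrightarrow> 0) (at_right 0)"
    using tendsto_scaleR[OF e0 assms] by (simp only: scaleR_zero_left)
  have B: "\<forall>\<^sub>F \<epsilon> in at_right 0. \<epsilon> *\<^sub>R ((1 / \<epsilon>\<^sup>2) *\<^sub>R G \<epsilon>) = (1 / \<epsilon>) *\<^sub>R G \<epsilon>"
    using ev by (rule eventually_mono) (simp add: power2_eq_square)
  show 1: "((\<lambda>\<epsilon>. (1 / \<epsilon>) *\<^sub>R G \<epsilon>) \<longlongrightarrow> 0) (at_right 0)"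
    by (rule Lim_transform_eventually[OF A B])
  have A2: "((\<lambda>\<epsilon>. \<epsilon> *\<^sub>R ((1 / \<epsilon>) *\<^sub>R G \<epsilon>)) \<longlongrightarrow> 0) (at_right 0)"
    using tendsto_scaleR[OF e0 1] by (simp only: scaleR_zero_left)
  have B2: "\<forall>\<^sub>F \<epsilon> in at_right 0. \<epsilon> *\<^sub>R ((1 / \<epsilon>) *\<^sub>R G \<epsilon>) = G \<epsilon>"
    using ev by (rule eventually_mono) simp
  show "(G \<longlongrightarrow> 0) (at_right 0)"
    by (rule Lim_transform_eventually[OF A2 B2])
qed

lemma smooth_diff: "smooth_fun f \<Longrightarrow> f differentiable at x"
  unfolding smooth_fun_def by (metis pdl.simps(1))

lemma smooth_pd_diff: "smooth_fun f \<Longrightarrow> pd i f differentiable at x"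
  unfolding smooth_fun_def by (metis pdl.simps(1,2))



lemma exp_facts:
  fixes F :: "real \<Rightarrow> real^'d::finite \<Rightarrow> 'b::real_normed_vector"
  assumes E: "expansion F f0 f1 f2" and s: "smooth_fun f0" "smooth_fun f1" "smooth_fun f2"
  shows exp_diff: "\<forall>\<^sub>F \<epsilon> in at_right 0. \<forall>y. F \<epsilon> differentiable at y"
    and exp_val: "((\<lambda>\<epsilon>. F \<epsilon> x) \<longlongrightarrow> f0 x) (at_right 0)"
    and exp_pd0: "((\<lambda>\<epsilon>. pd i (F \<epsilon>) x) \<longlongrightarrow> pd i f0 x) (at_right 0)"
    and exp_pd1: "pd i f0 x = 0 \<Longrightarrow> ((\<lambda>\<epsilon>. (1/\<epsilon>) *\<^sub>R pd i (F \<epsilon>) x) \<longlongrightarrow> pd i f1 x) (at_right 0)"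
    and exp_pd2: "pd i f0 x = 0 \<Longrightarrow> pd i f1 x = 0 \<Longrightarrow>
                   ((\<lambda>\<epsilon>. (1/\<epsilon>\<^sup>2) *\<^sub>R pd i (F \<epsilon>) x) \<longlongrightarrow> pd i f2 x) (at_right 0)"
proof -
  define r where "r \<epsilon> y = F \<epsilon> y - (f0 y + \<epsilon> *\<^sub>R f1 y + \<epsilon>\<^sup>2 *\<^sub>R f2 y)" for \<epsilon> y
  have C1: "\<forall>\<^sub>F \<epsilon> in at_right 0. C1_fun (r \<epsilon>)"
    and B: "\<And>e. e > 0 \<Longrightarrow> \<forall>\<^sub>F \<epsilon> in at_right 0. \<forall>x. norm (r \<epsilon> x) \<le> e * \<epsilon>\<^sup>2 \<and> (\<forall>i. norm (pd i (r \<epsilon>) x) \<le> e * \<epsilon>\<^sup>2)"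
    using E unfolding expansion_def Let_def r_def[abs_def] by auto
  have d0: "f0 differentiable at y" "f1 differentiable at y" "f2 differentiable at y" for y
    using s by (auto intro: smooth_diff)
  have Feq: "F \<epsilon> = (\<lambda>y. (f0 y + \<epsilon> *\<^sub>R f1 y + \<epsilon>\<^sup>2 *\<^sub>R f2 y) + r \<epsilon> y)" for \<epsilon>
    by (simp add: r_def)
  have ev0: "\<forall>\<^sub>F \<epsilon> in at_right (0::real). \<epsilon> > 0" by (simp add: eventually_at_right_less)
  have dpoly: "(\<lambda>y. f0 y + \<epsilon> *\<^sub>R f1 y + \<epsilon>\<^sup>2 *\<^sub>R f2 y) differentiable at y" for \<epsilon> y
    using d0 by (intro differentiable_add differentiable_scaleR differentiable_const) auto
  show "\<forall>\<^sub>F \<epsilon> in at_right 0. \<forall>y. F \<epsilon> differentiable at y"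
    using C1 by eventually_elim (auto simp: C1_fun_def Feq intro!: differentiable_add dpoly)
  have pdF: "\<forall>\<^sub>F \<epsilon> in at_right 0. pd i (F \<epsilon>) x = pd i f0 x + \<epsilon> *\<^sub>R pd i f1 x + \<epsilon>\<^sup>2 *\<^sub>R pd i f2 x + pd i (r \<epsilon>) x"
    using C1
  proof eventually_elim
    case (elim \<epsilon>)
    then have dr: "r \<epsilon> differentiable at x" by (simp add: C1_fun_def)
    have "pd i (F \<epsilon>) x = pd i (\<lambda>y. f0 y + \<epsilon> *\<^sub>R f1 y + \<epsilon>\<^sup>2 *\<^sub>R f2 y) x + pd i (r \<epsilon>) x"
      unfolding Feq by (rule pd_add[OF dpoly dr])
    also have "pd i (\<lambda>y. f0 y + \<epsilon> *\<^sub>R f1 y + \<epsilon>\<^sup>2 *\<^sub>R f2 y) x = pd i f0 x + \<epsilon> *\<^sub>R pd i f1 x + \<epsilon>\<^sup>2 *\<^sub>R pd i f2 x"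
      using d0 by (simp add: pd_add pd_cscale differentiable_add differentiable_scaleR)
    finally show ?case .
  qed
  have rlim: "((\<lambda>\<epsilon>. (1/\<epsilon>\<^sup>2) *\<^sub>R r \<epsilon> x) \<longlongrightarrow> 0) (at_right 0)"
    and rdlim: "((\<lambda>\<epsilon>. (1/\<epsilon>\<^sup>2) *\<^sub>R pd i (r \<epsilon>) x) \<longlongrightarrow> 0) (at_right 0)"
  proof -
    show "((\<lambda>\<epsilon>. (1/\<epsilon>\<^sup>2) *\<^sub>R r \<epsilon> x) \<longlongrightarrow> 0) (at_right 0)"
    proof (rule tendstoI)
      fix e :: real assume e: "e > 0"
      have "\<forall>\<^sub>F \<epsilon> in at_right 0. \<forall>x. norm (r \<epsilon> x) \<le> e/2 * \<epsilon>\<^sup>2 \<and> (\<forall>i. norm (pd i (r \<epsilon>) x) \<le> e/2 * \<epsilon>\<^sup>2)"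
        using B[of "e/2"] e by simp
      with ev0 show "\<forall>\<^sub>F \<epsilon> in at_right 0. dist ((1/\<epsilon>\<^sup>2) *\<^sub>R r \<epsilon> x) 0 < e"
      proof eventually_elim
        case (elim \<epsilon>)
        then have "norm (r \<epsilon> x) \<le> e/2 * \<epsilon>\<^sup>2" by blast
        then have "norm ((1/\<epsilon>\<^sup>2) *\<^sub>R r \<epsilon> x) \<le> e/2" using elim(1) by (simp add: field_simps)
        then have "norm ((1/\<epsilon>\<^sup>2) *\<^sub>R r \<epsilon> x) < e" using e by linarith
        then show ?case by (simp only: dist_norm diff_zero)
      qed
    qed
    show "((\<lambda>\<epsilon>. (1/\<epsilon>\<^sup>2) *\<^sub>R pd i (r \<epsilon>) x) \<longlongrightarrow> 0) (at_right 0)"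
    proof (rule tendstoI)
      fix e :: real assume e: "e > 0"
      have "\<forall>\<^sub>F \<epsilon> in at_right 0. \<forall>x. norm (r \<epsilon> x) \<le> e/2 * \<epsilon>\<^sup>2 \<and> (\<forall>i. norm (pd i (r \<epsilon>) x) \<le> e/2 * \<epsilon>\<^sup>2)"
        using B[of "e/2"] e by simp
      with ev0 show "\<forall>\<^sub>F \<epsilon> in at_right 0. dist ((1/\<epsilon>\<^sup>2) *\<^sub>R pd i (r \<epsilon>) x) 0 < e"
      proof eventually_elim
        case (elim \<epsilon>)
        then have "norm (pd i (r \<epsilon>) x) \<le> e/2 * \<epsilon>\<^sup>2" by blast
        then have "norm ((1/\<epsilon>\<^sup>2) *\<^sub>R pd i (r \<epsilon>) x) \<le> e/2" using elim(1) by (simp add: field_simps)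
        then have "norm ((1/\<epsilon>\<^sup>2) *\<^sub>R pd i (r \<epsilon>) x) < e" using e by linarith
        then show ?case by (simp only: dist_norm diff_zero)
      qed
    qed
  qed
  have e0: "((\<lambda>\<epsilon>::real. \<epsilon>) \<longlongrightarrow> 0) (at_right 0)" by (rule tendsto_ident_at)
  note r1 = sq_lim[OF rlim] and rd1 = sq_lim[OF rdlim]
  show "((\<lambda>\<epsilon>. F \<epsilon> x) \<longlongrightarrow> f0 x) (at_right 0)"
  proof -
    have "((\<lambda>\<epsilon>. (f0 x + \<epsilon> *\<^sub>R f1 x + \<epsilon>\<^sup>2 *\<^sub>R f2 x) + r \<epsilon> x) \<longlongrightarrow> (f0 x + 0 *\<^sub>R f1 x + 0\<^sup>2 *\<^sub>R f2 x) + 0) (at_right 0)"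
      by (intro tendsto_intros e0 r1(2))
    then show ?thesis by (simp add: Feq)
  qed
  show "((\<lambda>\<epsilon>. pd i (F \<epsilon>) x) \<longlongrightarrow> pd i f0 x) (at_right 0)"
  proof -
    have "((\<lambda>\<epsilon>. pd i f0 x + \<epsilon> *\<^sub>R pd i f1 x + \<epsilon>\<^sup>2 *\<^sub>R pd i f2 x + pd i (r \<epsilon>) x) \<longlongrightarrow> pd i f0 x + 0 *\<^sub>R pd i f1 x + 0\<^sup>2 *\<^sub>R pd i f2 x + 0) (at_right 0)"
      by (intro tendsto_intros e0 rd1(2))
    then have "((\<lambda>\<epsilon>. pd i f0 x + \<epsilon> *\<^sub>R pd i f1 x + \<epsilon>\<^sup>2 *\<^sub>R pd i f2 x + pd i (r \<epsilon>) x) \<longlongrightarrow> pd i f0 x) (at_right 0)"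
      by simp
    moreover have "\<forall>\<^sub>F \<epsilon> in at_right 0. pd i f0 x + \<epsilon> *\<^sub>R pd i f1 x + \<epsilon>\<^sup>2 *\<^sub>R pd i f2 x + pd i (r \<epsilon>) x = pd i (F \<epsilon>) x"
      using pdF by (rule eventually_mono) simp
    ultimately show ?thesis by (rule Lim_transform_eventually)
  qed
  show "((\<lambda>\<epsilon>. (1/\<epsilon>) *\<^sub>R pd i (F \<epsilon>) x) \<longlongrightarrow> pd i f1 x) (at_right 0)" if z0: "pd i f0 x = 0"
  proof -
    have "((\<lambda>\<epsilon>. pd i f1 x + \<epsilon> *\<^sub>R pd i f2 x + (1/\<epsilon>) *\<^sub>R pd i (r \<epsilon>) x) \<longlongrightarrow> pd i f1 x + 0 *\<^sub>R pd i f2 x + 0) (at_right 0)"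
      by (intro tendsto_intros e0 rd1(1))
    then have A: "((\<lambda>\<epsilon>. pd i f1 x + \<epsilon> *\<^sub>R pd i f2 x + (1/\<epsilon>) *\<^sub>R pd i (r \<epsilon>) x) \<longlongrightarrow> pd i f1 x) (at_right 0)"
      by (simp only: scaleR_zero_left add_0_right)
    have B: "\<forall>\<^sub>F \<epsilon> in at_right 0. pd i f1 x + \<epsilon> *\<^sub>R pd i f2 x + (1/\<epsilon>) *\<^sub>R pd i (r \<epsilon>) x = (1/\<epsilon>) *\<^sub>R pd i (F \<epsilon>) x"
      using pdF ev0 by eventually_elim (simp add: z0 scaleR_add_right power2_eq_square)
    show ?thesis by (rule Lim_transform_eventually[OF A B])
  qed
  show "((\<lambda>\<epsilon>. (1/\<epsilon>\<^sup>2) *\<^sub>R pd i (F \<epsilon>) x) \<longlongrightarrow> pd i f2 x) (at_right 0)" if z0: "pd i f0 x = 0" and z1: "pd i f1 x = 0"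
  proof -
    have "((\<lambda>\<epsilon>. pd i f2 x + (1/\<epsilon>\<^sup>2) *\<^sub>R pd i (r \<epsilon>) x) \<longlongrightarrow> pd i f2 x + 0) (at_right 0)"
      by (intro tendsto_intros rdlim)
    then have A: "((\<lambda>\<epsilon>. pd i f2 x + (1/\<epsilon>\<^sup>2) *\<^sub>R pd i (r \<epsilon>) x) \<longlongrightarrow> pd i f2 x) (at_right 0)"
      by (simp only: add_0_right)
    have B: "\<forall>\<^sub>F \<epsilon> in at_right 0. pd i f2 x + (1/\<epsilon>\<^sup>2) *\<^sub>R pd i (r \<epsilon>) x = (1/\<epsilon>\<^sup>2) *\<^sub>R pd i (F \<epsilon>) x"
      using pdF ev0 by eventually_elim (simp add: z0 z1 scaleR_add_right)
    show ?thesis by (rule Lim_transform_eventually[OF A B])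
  qed
qed



theorem mainTheorem1:
  fixes \<gamma> \<Delta>t :: real and s :: nat
    and At A :: "nat \<Rightarrow> nat \<Rightarrow> real" and wt w :: "nat \<Rightarrow> real"
    and \<rho>n0 \<rho>n2 :: "real^'d::finite \<Rightarrow> real" and un0 un1 :: "real^'d \<Rightarrow> real^'d"
    and rho :: "real \<Rightarrow> nat \<Rightarrow> real^'d \<Rightarrow> real" and q :: "real \<Rightarrow> nat \<Rightarrow> real^'d \<Rightarrow> real^'d"
    and rhoN :: "real \<Rightarrow> real^'d \<Rightarrow> real" and qN :: "real \<Rightarrow> real^'d \<Rightarrow> real^'d"
    and rho0 rho1 rho2 :: "nat \<Rightarrow> real^'d \<Rightarrow> real" and u0 u1 u2 :: "nat \<Rightarrow> real^'d \<Rightarrow> real^'d"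
  assumes gamma_pos: "\<gamma> > 0" and dt_pos: "\<Delta>t > 0"
    and scheme: "DIRK_IMEX s At A" and gsa: "GSA s At A wt w"
    and scheme_type: "type_A s A \<or> type_CK s A"
    and data_smooth: "smooth_fun \<rho>n0" "smooth_fun \<rho>n2" "smooth_fun un0" "smooth_fun un1"
    and data_periodic: "periodic_torus \<rho>n0" "periodic_torus \<rho>n2" "periodic_torus un0" "periodic_torus un1"
    and rho_n0_pos: "\<forall>x. \<rho>n0 x > 0"
    and grad_rho_n0: "\<forall>x. grad \<rho>n0 x = 0"
    and div_u_n0: "\<forall>x. dive un0 x = 0"
    and stages: "\<forall>\<^sub>F \<epsilon> in at_right 0.
       (\<forall>k\<in>{1..s}. periodic_torus (rho \<epsilon> k) \<and> periodic_torus (q \<epsilon> k) \<and> (\<forall>x. rho \<epsilon> k x > 0)) \<and>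
       (\<forall>k\<in>{1..s}. \<forall>x. rho \<epsilon> k x =
           (\<rho>n0 x + \<epsilon>\<^sup>2 * \<rho>n2 x) - \<Delta>t * (\<Sum>l\<in>{1..k}. A k l * dive (q \<epsilon> l) x)) \<and>
       (\<forall>k\<in>{1..s}. \<forall>x. q \<epsilon> k x =
           (\<rho>n0 x + \<epsilon>\<^sup>2 * \<rho>n2 x) *\<^sub>R (un0 x + \<epsilon> *\<^sub>R un1 x)
           - \<Delta>t *\<^sub>R (\<Sum>l\<in>{1..k-1}. At k l *\<^sub>R
                divT (\<lambda>y i j. otimes (q \<epsilon> l y) (q \<epsilon> l y) i j / rho \<epsilon> l y) x)
           - (\<Delta>t / \<epsilon>\<^sup>2) *\<^sub>R (\<Sum>l\<in>{1..k}. A k l *\<^sub>R grad (\<lambda>y. pres \<gamma> (rho \<epsilon> l y)) x))"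
    and update: "\<forall>\<^sub>F \<epsilon> in at_right 0.
       (\<forall>x. rhoN \<epsilon> x =
           (\<rho>n0 x + \<epsilon>\<^sup>2 * \<rho>n2 x) - \<Delta>t * (\<Sum>k\<in>{1..s}. w k * dive (q \<epsilon> k) x)) \<and>
       (\<forall>x. qN \<epsilon> x =
           (\<rho>n0 x + \<epsilon>\<^sup>2 * \<rho>n2 x) *\<^sub>R (un0 x + \<epsilon> *\<^sub>R un1 x)
           - \<Delta>t *\<^sub>R (\<Sum>k\<in>{1..s}. wt k *\<^sub>R
                divT (\<lambda>y i j. otimes (q \<epsilon> k y) (q \<epsilon> k y) i j / rho \<epsilon> k y) x)
           - (\<Delta>t / \<epsilon>\<^sup>2) *\<^sub>R (\<Sum>k\<in>{1..s}. w k *\<^sub>R grad (\<lambda>y. pres \<gamma> (rho \<epsilon> k y)) x))"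
    and coeff_smooth: "\<forall>k\<in>{1..s}. smooth_fun (rho0 k) \<and> smooth_fun (rho1 k) \<and> smooth_fun (rho2 k)
        \<and> smooth_fun (u0 k) \<and> smooth_fun (u1 k) \<and> smooth_fun (u2 k)"
    and coeff_periodic: "\<forall>k\<in>{1..s}. periodic_torus (rho0 k) \<and> periodic_torus (rho1 k) \<and> periodic_torus (rho2 k)
        \<and> periodic_torus (u0 k) \<and> periodic_torus (u1 k) \<and> periodic_torus (u2 k)"
    and exp_rho: "\<forall>k\<in>{1..s}. expansion (\<lambda>\<epsilon>. rho \<epsilon> k) (rho0 k) (rho1 k) (rho2 k)"
    and exp_u: "\<forall>k\<in>{1..s}. expansion (\<lambda>\<epsilon> x. (1 / rho \<epsilon> k x) *\<^sub>R q \<epsilon> k x) (u0 k) (u1 k) (u2 k)"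
  shows "(\<forall>k\<in>{1..s}. (\<forall>x. rho0 k x = \<rho>n0 x) \<and> (\<exists>c. \<forall>x. rho1 k x = c) \<and> (\<forall>x. dive (u0 k) x = 0))
     \<and> (\<forall>\<^sub>F \<epsilon> in at_right 0. rhoN \<epsilon> = rho \<epsilon> s \<and> qN \<epsilon> = q \<epsilon> s)
     \<and> (\<exists>c. \<forall>x. rho0 s x = c) \<and> (\<forall>x. rho0 s x = \<rho>n0 x) \<and> (\<forall>x. dive (u0 s) x = 0)
     \<and> (\<forall>x. u0 s x = un0 x
            - \<Delta>t *\<^sub>R (\<Sum>k\<in>{1..s}. wt k *\<^sub>R divT (\<lambda>y. otimes (u0 k y) (u0 k y)) x)
            - (\<Delta>t / \<rho>n0 x) *\<^sub>R (\<Sum>k\<in>{1..s}. w k *\<^sub>R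
                 grad (\<lambda>y. pres2 \<gamma> (rho0 k y) (rho1 k y) (rho2 k y)) x))"
proof -
  define I where "I = {1..s}"
  have finI: "finite I" by (simp add: I_def)
  have s1: "s \<ge> 1" using scheme by (simp add: DIRK_IMEX_def)
  have sI: "s \<in> I" using s1 by (simp add: I_def)
  have Atz: "\<And>k j. k \<in> I \<Longrightarrow> j \<in> I \<Longrightarrow> j \<ge> k \<Longrightarrow> At k j = 0"
    using scheme by (auto simp: DIRK_IMEX_def I_def)
  have Az: "\<And>k j. k \<in> I \<Longrightarrow> j \<in> I \<Longrightarrow> j > k \<Longrightarrow> A k j = 0"
    using scheme by (auto simp: DIRK_IMEX_def I_def)
  have wt_eq: "\<And>j. j \<in> I \<Longrightarrow> At s j = wt j" and w_eq: "\<And>j. j \<in> I \<Longrightarrow> A s j = w j"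
    using gsa by (auto simp: GSA_def I_def)
  have nb: "at_right (0::real) \<noteq> bot" by simp
  have dt0: "\<Delta>t \<noteq> 0" using dt_pos by simp
  have ev0: "\<forall>\<^sub>F \<epsilon> in at_right (0::real). \<epsilon> > 0" by (simp add: eventually_at_right_less)
  have e0: "((\<lambda>\<epsilon>::real. \<epsilon>) \<longlongrightarrow> 0) (at_right 0)" by (rule tendsto_ident_at)

  have pdn0: "\<And>i y. pd i \<rho>n0 y = 0"
  proof -
    fix i y show "pd i \<rho>n0 y = 0"
      using grad_rho_n0 unfolding grad_def by (metis vec_lambda_beta zero_index)
  qed
  obtain P where P: "\<And>y. \<rho>n0 y = P"
    using const_from_pd0[OF smooth_diff[OF data_smooth(1)] pdn0] by blast
  have P0: "P > 0" using rho_n0_pos P by metis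

  define U where "U k \<epsilon> y = (1 / rho \<epsilon> k y) *\<^sub>R q \<epsilon> k y" for k \<epsilon> y
  have expU: "\<And>k. k \<in> I \<Longrightarrow> expansion (\<lambda>\<epsilon>. U k \<epsilon>) (u0 k) (u1 k) (u2 k)"
    using exp_u by (simp add: U_def[abs_def] I_def)
  have expR: "\<And>k. k \<in> I \<Longrightarrow> expansion (\<lambda>\<epsilon>. rho \<epsilon> k) (rho0 k) (rho1 k) (rho2 k)"
    using exp_rho by (simp add: I_def)
  have smR: "\<And>k. k \<in> I \<Longrightarrow> smooth_fun (rho0 k)" "\<And>k. k \<in> I \<Longrightarrow> smooth_fun (rho1 k)"
     "\<And>k. k \<in> I \<Longrightarrow> smooth_fun (rho2 k)"
    and smU: "\<And>k. k \<in> I \<Longrightarrow> smooth_fun (u0 k)" "\<And>k. k \<in> I \<Longrightarrow> smooth_fun (u1 k)"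
     "\<And>k. k \<in> I \<Longrightarrow> smooth_fun (u2 k)"
    using coeff_smooth by (auto simp: I_def)

  have POS: "\<forall>\<^sub>F \<epsilon> in at_right 0. \<forall>k\<in>I. \<forall>y. rho \<epsilon> k y > 0"
    using stages by (rule eventually_mono) (auto simp: I_def)
  have RHOEQ: "\<forall>\<^sub>F \<epsilon> in at_right 0. \<forall>k\<in>I. \<forall>x. rho \<epsilon> k x =
           (\<rho>n0 x + \<epsilon>\<^sup>2 * \<rho>n2 x) - \<Delta>t * (\<Sum>l\<in>{1..k}. A k l * dive (q \<epsilon> l) x)"
    using stages by (rule eventually_mono) (auto simp: I_def)
  have QEQ: "\<forall>\<^sub>F \<epsilon> in at_right 0. \<forall>k\<in>I. \<forall>x. q \<epsilon> k x =
           (\<rho>n0 x + \<epsilon>\<^sup>2 * \<rho>n2 x) *\<^sub>R (un0 x + \<epsilon> *\<^sub>R un1 x)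
           - \<Delta>t *\<^sub>R (\<Sum>l\<in>{1..k-1}. At k l *\<^sub>R
                divT (\<lambda>y i j. otimes (q \<epsilon> l y) (q \<epsilon> l y) i j / rho \<epsilon> l y) x)
           - (\<Delta>t / \<epsilon>\<^sup>2) *\<^sub>R (\<Sum>l\<in>{1..k}. A k l *\<^sub>R grad (\<lambda>y. pres \<gamma> (rho \<epsilon> l y)) x)"
    using stages by (rule eventually_mono) (auto simp: I_def)
  have DIFF: "\<forall>\<^sub>F \<epsilon> in at_right 0. \<forall>k\<in>I. \<forall>y. rho \<epsilon> k differentiable at y \<and> U k \<epsilon> differentiable at y"
  proof (rule eventually_ball_finite[OF finI], intro ballI)
    fix k assume k: "k \<in> I"
    show "\<forall>\<^sub>F \<epsilon> in at_right 0. \<forall>y. rho \<epsilon> k differentiable at y \<and> U k \<epsilon> differentiable at y"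
      using exp_diff[OF expR[OF k] smR[OF k]] exp_diff[OF expU[OF k] smU[OF k]]
      by eventually_elim auto
  qed
  have QU: "\<forall>\<^sub>F \<epsilon> in at_right 0. \<forall>k\<in>I. q \<epsilon> k = (\<lambda>y. rho \<epsilon> k y *\<^sub>R U k \<epsilon> y)"
    using POS
  proof (rule eventually_mono, intro ballI ext)
    fix \<epsilon> k y assume h: "\<forall>k\<in>I. \<forall>y. rho \<epsilon> k y > 0" and k: "k \<in> I"
    then have "rho \<epsilon> k y \<noteq> 0" by (metis less_irrefl)
    then show "q \<epsilon> k y = rho \<epsilon> k y *\<^sub>R U k \<epsilon> y" by (simp add: U_def)
  qed

  have Rlim: "\<And>k x. k \<in> I \<Longrightarrow> ((\<lambda>\<epsilon>. rho \<epsilon> k x) \<longlongrightarrow> rho0 k x) (at_right 0)"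
    using exp_val expR smR by blast
  have Rpd: "\<And>k x i. k \<in> I \<Longrightarrow> ((\<lambda>\<epsilon>. pd i (rho \<epsilon> k) x) \<longlongrightarrow> pd i (rho0 k) x) (at_right 0)"
    using exp_pd0 expR smR by blast
  have Ulim: "\<And>k x j. k \<in> I \<Longrightarrow> ((\<lambda>\<epsilon>. U k \<epsilon> x $ j) \<longlongrightarrow> u0 k x $ j) (at_right 0)"
    by (rule tendsto_vec_nth, rule exp_val[OF expU smU]) auto
  have Upd: "\<And>k x i j. k \<in> I \<Longrightarrow> ((\<lambda>\<epsilon>. pd i (U k \<epsilon>) x $ j) \<longlongrightarrow> pd i (u0 k) x $ j) (at_right 0)"
    by (rule tendsto_vec_nth, rule exp_pd0[OF expU smU]) auto
  have rho0_nn: "\<And>k y. k \<in> I \<Longrightarrow> rho0 k y \<ge> 0"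
  proof -
    fix k y assume k: "k \<in> I"
    have "\<forall>\<^sub>F \<epsilon> in at_right 0. 0 \<le> rho \<epsilon> k y"
      using POS by (rule eventually_mono) (use k in \<open>auto intro: less_imp_le\<close>)
    then show "rho0 k y \<ge> 0" using tendsto_lowerbound[OF Rlim[OF k] _ nb] by blast
  qed
  have Uc_d: "\<And>k \<epsilon> j. (\<forall>y. U k \<epsilon> differentiable at y) \<Longrightarrow> (\<lambda>y. U k \<epsilon> y $ j) differentiable at x" for x
    by (rule diff_nth) blast
  define DV where "DV l x = (\<Sum>i\<in>UNIV. rho0 l x * pd i (u0 l) x $ i + pd i (rho0 l) x * u0 l x $ i)" for l x
  have DVlim: "\<And>l x. l \<in> I \<Longrightarrow> ((\<lambda>\<epsilon>. dive (q \<epsilon> l) x) \<longlongrightarrow> DV l x) (at_right 0)"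
  proof -
    fix l x assume l: "l \<in> I"
    have A1: "((\<lambda>\<epsilon>. \<Sum>i\<in>UNIV. rho \<epsilon> l x * pd i (U l \<epsilon>) x $ i + pd i (rho \<epsilon> l) x * U l \<epsilon> x $ i) \<longlongrightarrow> DV l x) (at_right 0)"
      unfolding DV_def using l by (intro tendsto_sum tendsto_add tendsto_mult Rlim Rpd Ulim Upd)
    have B1: "\<forall>\<^sub>F \<epsilon> in at_right 0. (\<Sum>i\<in>UNIV. rho \<epsilon> l x * pd i (U l \<epsilon>) x $ i + pd i (rho \<epsilon> l) x * U l \<epsilon> x $ i) = dive (q \<epsilon> l) x"
      using QU DIFF
    proof eventually_elim
      case (elim \<epsilon>)
      have qe: "q \<epsilon> l = (\<lambda>y. rho \<epsilon> l y *\<^sub>R U l \<epsilon> y)" using elim l by blast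
      have dR: "rho \<epsilon> l differentiable at y" and dU: "U l \<epsilon> differentiable at y" for y
        using elim l by blast+
      have "dive (q \<epsilon> l) x = (\<Sum>i\<in>UNIV. pd i (\<lambda>y. rho \<epsilon> l y * U l \<epsilon> y $ i) x)"
        unfolding dive_def qe by simp
      also have "\<dots> = (\<Sum>i\<in>UNIV. rho \<epsilon> l x * pd i (U l \<epsilon>) x $ i + pd i (rho \<epsilon> l) x * U l \<epsilon> x $ i)"
        by (intro sum.cong refl) (simp add: pd_mult[OF dR diff_nth[OF dU]] pd_nth[OF dU])
      finally show ?case by simp
    qed
    show "((\<lambda>\<epsilon>. dive (q \<epsilon> l) x) \<longlongrightarrow> DV l x) (at_right 0)"
      by (rule Lim_transform_eventually[OF A1 B1])
  qed
  define DT where "DT l \<epsilon> x = divT (\<lambda>y i j. otimes (q \<epsilon> l y) (q \<epsilon> l y) i j / rho \<epsilon> l y) x" for l \<epsilon> x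
  define DT0 where "DT0 l x = (\<chi> j. \<Sum>i\<in>UNIV. rho0 l x * (u0 l x $ i * pd i (u0 l) x $ j + pd i (u0 l) x $ i * u0 l x $ j)
        + pd i (rho0 l) x * (u0 l x $ i * u0 l x $ j))" for l x
  have DTlim: "\<And>l x. l \<in> I \<Longrightarrow> ((\<lambda>\<epsilon>. DT l \<epsilon> x) \<longlongrightarrow> DT0 l x) (at_right 0)"
  proof -
    fix l x assume l: "l \<in> I"
    show "((\<lambda>\<epsilon>. DT l \<epsilon> x) \<longlongrightarrow> DT0 l x) (at_right 0)"
    proof (rule vec_tendstoI)
      fix j
      have A1: "((\<lambda>\<epsilon>. \<Sum>i\<in>UNIV. rho \<epsilon> l x * (U l \<epsilon> x $ i * pd i (U l \<epsilon>) x $ j + pd i (U l \<epsilon>) x $ i * U l \<epsilon> x $ j)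
          + pd i (rho \<epsilon> l) x * (U l \<epsilon> x $ i * U l \<epsilon> x $ j)) \<longlongrightarrow> DT0 l x $ j) (at_right 0)"
        unfolding DT0_def vec_lambda_beta using l
        by (intro tendsto_sum tendsto_add tendsto_mult Rlim Rpd Ulim Upd)
      have B1: "\<forall>\<^sub>F \<epsilon> in at_right 0. (\<Sum>i\<in>UNIV. rho \<epsilon> l x * (U l \<epsilon> x $ i * pd i (U l \<epsilon>) x $ j + pd i (U l \<epsilon>) x $ i * U l \<epsilon> x $ j)
          + pd i (rho \<epsilon> l) x * (U l \<epsilon> x $ i * U l \<epsilon> x $ j)) = DT l \<epsilon> x $ j"
        using QU DIFF POS
      proof eventually_elim
        case (elim \<epsilon>)
        have qe: "q \<epsilon> l = (\<lambda>y. rho \<epsilon> l y *\<^sub>R U l \<epsilon> y)" using elim l by blast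
        have dR: "rho \<epsilon> l differentiable at y" and dU: "U l \<epsilon> differentiable at y" for y
          using elim l by blast+
        have pos: "rho \<epsilon> l y > 0" for y using elim l by blast
        have fe: "(\<lambda>y. otimes (q \<epsilon> l y) (q \<epsilon> l y) i j / rho \<epsilon> l y) = (\<lambda>y. rho \<epsilon> l y * (U l \<epsilon> y $ i * U l \<epsilon> y $ j))" for i
        proof
          fix y
          have "rho \<epsilon> l y \<noteq> 0" using pos[of y] by simp
          then show "otimes (q \<epsilon> l y) (q \<epsilon> l y) i j / rho \<epsilon> l y = rho \<epsilon> l y * (U l \<epsilon> y $ i * U l \<epsilon> y $ j)"
            by (simp add: qe otimes_def field_simps power2_eq_square)
        qed
        have "DT l \<epsilon> x $ j = (\<Sum>i\<in>UNIV. pd i (\<lambda>y. rho \<epsilon> l y * (U l \<epsilon> y $ i * U l \<epsilon> y $ j)) x)"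
          unfolding DT_def divT_def vec_lambda_beta fe by simp
        also have "\<dots> = (\<Sum>i\<in>UNIV. rho \<epsilon> l x * (U l \<epsilon> x $ i * pd i (U l \<epsilon>) x $ j + pd i (U l \<epsilon>) x $ i * U l \<epsilon> x $ j)
          + pd i (rho \<epsilon> l) x * (U l \<epsilon> x $ i * U l \<epsilon> x $ j))"
          by (intro sum.cong refl) (simp add: pd_mult[OF dR differentiable_mult[OF diff_nth[OF dU] diff_nth[OF dU]]]
                pd_mult[OF diff_nth[OF dU] diff_nth[OF dU]] pd_nth[OF dU])
        finally show ?case by simp
      qed
      show "((\<lambda>\<epsilon>. DT l \<epsilon> x $ j) \<longlongrightarrow> DT0 l x $ j) (at_right 0)"
        by (rule Lim_transform_eventually[OF A1 B1])
    qed
  qed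
  have Qlim: "\<And>k x. k \<in> I \<Longrightarrow> ((\<lambda>\<epsilon>. q \<epsilon> k x) \<longlongrightarrow> rho0 k x *\<^sub>R u0 k x) (at_right 0)"
  proof -
    fix k x assume k: "k \<in> I"
    have A1: "((\<lambda>\<epsilon>. rho \<epsilon> k x *\<^sub>R U k \<epsilon> x) \<longlongrightarrow> rho0 k x *\<^sub>R u0 k x) (at_right 0)"
      using k by (intro tendsto_scaleR Rlim vec_tendstoI Ulim)
    have B1: "\<forall>\<^sub>F \<epsilon> in at_right 0. rho \<epsilon> k x *\<^sub>R U k \<epsilon> x = q \<epsilon> k x"
      using QU by (rule eventually_mono) (use k in auto)
    show "((\<lambda>\<epsilon>. q \<epsilon> k x) \<longlongrightarrow> rho0 k x *\<^sub>R u0 k x) (at_right 0)"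
      by (rule Lim_transform_eventually[OF A1 B1])
  qed
  define G where "G l \<epsilon> x = grad (\<lambda>y. pres \<gamma> (rho \<epsilon> l y)) x" for l \<epsilon> x
  have Gcomp: "\<forall>\<^sub>F \<epsilon> in at_right 0. \<forall>l\<in>I. \<forall>x i. G l \<epsilon> x $ i = \<gamma> * rho \<epsilon> l x powr (\<gamma> - 1) * pd i (rho \<epsilon> l) x"
    using DIFF POS
  proof eventually_elim
    case (elim \<epsilon>)
    show ?case
    proof (intro ballI allI)
      fix l x i assume l: "l \<in> I"
      have "rho \<epsilon> l differentiable at x" "rho \<epsilon> l x > 0" using elim l by blast+
      then show "G l \<epsilon> x $ i = \<gamma> * rho \<epsilon> l x powr (\<gamma> - 1) * pd i (rho \<epsilon> l) x"
        by (simp add: G_def grad_def pres_def pd_powr)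
    qed
  qed
  define H where "H k \<epsilon> x = (\<Sum>l\<in>{1..k}. A k l *\<^sub>R G l \<epsilon> x)" for k \<epsilon> x
  have Hsum: "\<And>k \<epsilon> x. k \<in> I \<Longrightarrow> H k \<epsilon> x = (\<Sum>l\<in>I. A k l *\<^sub>R G l \<epsilon> x)"
  proof -
    fix k \<epsilon> x assume k: "k \<in> I"
    show "H k \<epsilon> x = (\<Sum>l\<in>I. A k l *\<^sub>R G l \<epsilon> x)"
      unfolding H_def
    proof (rule sum.mono_neutral_left[OF finI])
      show "{1..k} \<subseteq> I" using k by (auto simp: I_def)
      show "\<forall>l\<in>I - {1..k}. A k l *\<^sub>R G l \<epsilon> x = 0" using Az k by (auto simp: I_def)
    qed
  qed
  define Y0 where "Y0 k x = (P *\<^sub>R un0 x) - \<Delta>t *\<^sub>R (\<Sum>l\<in>{1..k-1}. At k l *\<^sub>R DT0 l x) - rho0 k x *\<^sub>R u0 k x" for k x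
  have Hlim: "\<And>k x. k \<in> I \<Longrightarrow> ((\<lambda>\<epsilon>. (1/\<epsilon>\<^sup>2) *\<^sub>R H k \<epsilon> x) \<longlongrightarrow> (1/\<Delta>t) *\<^sub>R Y0 k x) (at_right 0)"
  proof -
    fix k x assume k: "k \<in> I"
    have sub: "l \<in> I" if "l \<in> {1..k-1}" for l using that k by (auto simp: I_def)
    have A1: "((\<lambda>\<epsilon>. (1/\<Delta>t) *\<^sub>R ((\<rho>n0 x + \<epsilon>\<^sup>2 * \<rho>n2 x) *\<^sub>R (un0 x + \<epsilon> *\<^sub>R un1 x)
           - \<Delta>t *\<^sub>R (\<Sum>l\<in>{1..k-1}. At k l *\<^sub>R DT l \<epsilon> x) - q \<epsilon> k x))
        \<longlongrightarrow> (1/\<Delta>t) *\<^sub>R ((P + 0\<^sup>2 * \<rho>n2 x) *\<^sub>R (un0 x + 0 *\<^sub>R un1 x)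
           - \<Delta>t *\<^sub>R (\<Sum>l\<in>{1..k-1}. At k l *\<^sub>R DT0 l x) - rho0 k x *\<^sub>R u0 k x)) (at_right 0)"
      unfolding P using k sub by (intro tendsto_intros e0 DTlim Qlim) auto
    then have A2: "((\<lambda>\<epsilon>. (1/\<Delta>t) *\<^sub>R ((\<rho>n0 x + \<epsilon>\<^sup>2 * \<rho>n2 x) *\<^sub>R (un0 x + \<epsilon> *\<^sub>R un1 x)
           - \<Delta>t *\<^sub>R (\<Sum>l\<in>{1..k-1}. At k l *\<^sub>R DT l \<epsilon> x) - q \<epsilon> k x)) \<longlongrightarrow> (1/\<Delta>t) *\<^sub>R Y0 k x) (at_right 0)"
      by (simp add: Y0_def)
    have B1: "\<forall>\<^sub>F \<epsilon> in at_right 0. (1/\<Delta>t) *\<^sub>R ((\<rho>n0 x + \<epsilon>\<^sup>2 * \<rho>n2 x) *\<^sub>R (un0 x + \<epsilon> *\<^sub>R un1 x)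
           - \<Delta>t *\<^sub>R (\<Sum>l\<in>{1..k-1}. At k l *\<^sub>R DT l \<epsilon> x) - q \<epsilon> k x) = (1/\<epsilon>\<^sup>2) *\<^sub>R H k \<epsilon> x"
      using QEQ ev0
    proof eventually_elim
      case (elim \<epsilon>)
      have "q \<epsilon> k x = (\<rho>n0 x + \<epsilon>\<^sup>2 * \<rho>n2 x) *\<^sub>R (un0 x + \<epsilon> *\<^sub>R un1 x)
           - \<Delta>t *\<^sub>R (\<Sum>l\<in>{1..k-1}. At k l *\<^sub>R DT l \<epsilon> x) - (\<Delta>t / \<epsilon>\<^sup>2) *\<^sub>R H k \<epsilon> x"
        using elim k by (simp add: DT_def H_def G_def)
      then have "(\<rho>n0 x + \<epsilon>\<^sup>2 * \<rho>n2 x) *\<^sub>R (un0 x + \<epsilon> *\<^sub>R un1 x)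
           - \<Delta>t *\<^sub>R (\<Sum>l\<in>{1..k-1}. At k l *\<^sub>R DT l \<epsilon> x) - q \<epsilon> k x = (\<Delta>t / \<epsilon>\<^sup>2) *\<^sub>R H k \<epsilon> x"
        by (simp add: algebra_simps)
      then show ?case using dt0 by simp
    qed
    show "((\<lambda>\<epsilon>. (1/\<epsilon>\<^sup>2) *\<^sub>R H k \<epsilon> x) \<longlongrightarrow> (1/\<Delta>t) *\<^sub>R Y0 k x) (at_right 0)"
      by (rule Lim_transform_eventually[OF A2 B1])
  qed
  have Gsq: "\<And>l x. l \<in> I \<Longrightarrow> \<exists>M. ((\<lambda>\<epsilon>. (1/\<epsilon>\<^sup>2) *\<^sub>R G l \<epsilon> x) \<longlongrightarrow> M) (at_right 0)"
  proof -
    fix l x assume l: "l \<in> I"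
    show "\<exists>M. ((\<lambda>\<epsilon>. (1/\<epsilon>\<^sup>2) *\<^sub>R G l \<epsilon> x) \<longlongrightarrow> M) (at_right 0)"
      using scheme_type
    proof
      assume tA: "type_A s A"
      then obtain B where B: "\<forall>i\<in>I. \<forall>j\<in>I. (\<Sum>l\<in>I. B i l * A l j) = (if i = j then 1 else 0)"
        unfolding type_A_def invertible_block_def I_def by blast
      have eq: "(1/\<epsilon>\<^sup>2) *\<^sub>R G l \<epsilon> x = (\<Sum>k\<in>I. B l k *\<^sub>R ((1/\<epsilon>\<^sup>2) *\<^sub>R H k \<epsilon> x))" for \<epsilon>
      proof (rule inv_apply[OF B finI _ l])
        show "\<forall>k\<in>I. (\<Sum>l\<in>I. A k l *\<^sub>R ((1/\<epsilon>\<^sup>2) *\<^sub>R G l \<epsilon> x)) = (1/\<epsilon>\<^sup>2) *\<^sub>R H k \<epsilon> x"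
          using Hsum by (simp add: scaleR_sum_right)
      qed
      have "((\<lambda>\<epsilon>. \<Sum>k\<in>I. B l k *\<^sub>R ((1/\<epsilon>\<^sup>2) *\<^sub>R H k \<epsilon> x)) \<longlongrightarrow> (\<Sum>k\<in>I. B l k *\<^sub>R ((1/\<Delta>t) *\<^sub>R Y0 k x))) (at_right 0)"
        by (intro tendsto_sum tendsto_scaleR tendsto_const Hlim)
      then show ?thesis unfolding eq by blast
    next
      assume tC: "type_CK s A"
      then have s2: "s \<ge> 2" and A1: "\<And>j. j \<in> I \<Longrightarrow> A 1 j = 0" by (auto simp: type_CK_def I_def)
      define J where "J = {2..s}"
      have finJ: "finite J" by (simp add: J_def)
      have IJ: "I = insert 1 J" "1 \<notin> J" using s2 by (auto simp: I_def J_def)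
      obtain B where B: "\<forall>i\<in>J. \<forall>j\<in>J. (\<Sum>l\<in>J. B i l * A l j) = (if i = j then 1 else 0)"
        using tC unfolding type_CK_def invertible_block_def J_def by blast
      have oneI: "1 \<in> I" using IJ by simp
      have G1: "((\<lambda>\<epsilon>. (1/\<epsilon>\<^sup>2) *\<^sub>R G 1 \<epsilon> x) \<longlongrightarrow> (\<chi> i. \<gamma> * P powr (\<gamma> - 1) * pd i \<rho>n2 x)) (at_right 0)"
      proof (rule vec_tendstoI)
        fix i
        have r1: "\<forall>\<^sub>F \<epsilon> in at_right 0. rho \<epsilon> 1 = (\<lambda>y. \<rho>n0 y + \<epsilon>\<^sup>2 * \<rho>n2 y)"
          using RHOEQ by (rule eventually_mono) (use oneI A1 in \<open>auto simp: fun_eq_iff\<close>)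
        have A2: "((\<lambda>\<epsilon>. \<gamma> * (\<rho>n0 x + \<epsilon>\<^sup>2 * \<rho>n2 x) powr (\<gamma> - 1) * pd i \<rho>n2 x) \<longlongrightarrow> \<gamma> * (P + 0\<^sup>2 * \<rho>n2 x) powr (\<gamma> - 1) * pd i \<rho>n2 x) (at_right 0)"
          unfolding P using P0 by (intro tendsto_intros e0) auto
        have B2: "\<forall>\<^sub>F \<epsilon> in at_right 0. \<gamma> * (\<rho>n0 x + \<epsilon>\<^sup>2 * \<rho>n2 x) powr (\<gamma> - 1) * pd i \<rho>n2 x = ((1/\<epsilon>\<^sup>2) *\<^sub>R G 1 \<epsilon> x) $ i"
          using r1 Gcomp ev0
        proof eventually_elim
          case (elim \<epsilon>)
          have "pd i (rho \<epsilon> 1) x = \<epsilon>\<^sup>2 * pd i \<rho>n2 x"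
            unfolding elim(1)
            using smooth_diff[OF data_smooth(1)] smooth_diff[OF data_smooth(2)]
            by (simp add: pd_add differentiable_mult differentiable_const pd_cmult pdn0)
          then show ?case using elim oneI by (simp add: elim(1))
        qed
        show "((\<lambda>\<epsilon>. ((1/\<epsilon>\<^sup>2) *\<^sub>R G 1 \<epsilon> x) $ i) \<longlongrightarrow> (\<chi> i. \<gamma> * P powr (\<gamma> - 1) * pd i \<rho>n2 x) $ i) (at_right 0)"
          using Lim_transform_eventually[OF A2 B2] by simp
      qed
      show ?thesis
      proof (cases "l = 1")
        case True then show ?thesis using G1 by blast
      next
        case False
        then have lJ: "l \<in> J" using l IJ by auto
        have eq: "(1/\<epsilon>\<^sup>2) *\<^sub>R G l \<epsilon> x = (\<Sum>k\<in>J. B l k *\<^sub>R ((1/\<epsilon>\<^sup>2) *\<^sub>R H k \<epsilon> x - A k 1 *\<^sub>R ((1/\<epsilon>\<^sup>2) *\<^sub>R G 1 \<epsilon> x)))" for \<epsilon>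
        proof (rule inv_apply[OF B finJ _ lJ])
          show "\<forall>k\<in>J. (\<Sum>l\<in>J. A k l *\<^sub>R ((1/\<epsilon>\<^sup>2) *\<^sub>R G l \<epsilon> x)) = (1/\<epsilon>\<^sup>2) *\<^sub>R H k \<epsilon> x - A k 1 *\<^sub>R ((1/\<epsilon>\<^sup>2) *\<^sub>R G 1 \<epsilon> x)"
          proof
            fix k assume k: "k \<in> J"
            then have kI: "k \<in> I" using IJ by auto
            have "H k \<epsilon> x = A k 1 *\<^sub>R G 1 \<epsilon> x + (\<Sum>l\<in>J. A k l *\<^sub>R G l \<epsilon> x)"
              unfolding Hsum[OF kI] IJ(1) using IJ(2) finJ by simp
            then show "(\<Sum>l\<in>J. A k l *\<^sub>R ((1/\<epsilon>\<^sup>2) *\<^sub>R G l \<epsilon> x)) = (1/\<epsilon>\<^sup>2) *\<^sub>R H k \<epsilon> x - A k 1 *\<^sub>R ((1/\<epsilon>\<^sup>2) *\<^sub>R G 1 \<epsilon> x)"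
              by (simp add: scaleR_sum_right scaleR_add_right)
          qed
        qed
        have "((\<lambda>\<epsilon>. \<Sum>k\<in>J. B l k *\<^sub>R ((1/\<epsilon>\<^sup>2) *\<^sub>R H k \<epsilon> x - A k 1 *\<^sub>R ((1/\<epsilon>\<^sup>2) *\<^sub>R G 1 \<epsilon> x)))
            \<longlongrightarrow> (\<Sum>k\<in>J. B l k *\<^sub>R ((1/\<Delta>t) *\<^sub>R Y0 k x - A k 1 *\<^sub>R (\<chi> i. \<gamma> * P powr (\<gamma> - 1) * pd i \<rho>n2 x)))) (at_right 0)"
          using IJ by (intro tendsto_sum tendsto_scaleR tendsto_const tendsto_diff Hlim G1) auto
        then show ?thesis unfolding eq by blast
      qed
    qed
  qed
  have G0: "\<And>l x. l \<in> I \<Longrightarrow> ((\<lambda>\<epsilon>. G l \<epsilon> x) \<longlongrightarrow> 0) (at_right 0)"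
    and G1: "\<And>l x. l \<in> I \<Longrightarrow> ((\<lambda>\<epsilon>. (1/\<epsilon>) *\<^sub>R G l \<epsilon> x) \<longlongrightarrow> 0) (at_right 0)"
    using Gsq sq_lim by metis+
  have pdR0: "\<And>l x i. l \<in> I \<Longrightarrow> pd i (rho0 l) x = 0"
  proof -
    fix l x i assume l: "l \<in> I"
    show "pd i (rho0 l) x = 0"
    proof (cases "rho0 l x > 0")
      case True
      have A2: "((\<lambda>\<epsilon>. \<gamma> * rho \<epsilon> l x powr (\<gamma> - 1) * pd i (rho \<epsilon> l) x) \<longlongrightarrow> \<gamma> * rho0 l x powr (\<gamma> - 1) * pd i (rho0 l) x) (at_right 0)"
        using True l by (intro tendsto_intros Rlim Rpd) auto
      have B2: "\<forall>\<^sub>F \<epsilon> in at_right 0. \<gamma> * rho \<epsilon> l x powr (\<gamma> - 1) * pd i (rho \<epsilon> l) x = G l \<epsilon> x $ i"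
        using Gcomp by (rule eventually_mono) (use l in auto)
      have "((\<lambda>\<epsilon>. G l \<epsilon> x $ i) \<longlongrightarrow> 0 $ i) (at_right 0)" by (rule tendsto_vec_nth[OF G0[OF l]])
      then have "\<gamma> * rho0 l x powr (\<gamma> - 1) * pd i (rho0 l) x = 0"
        using tendsto_unique[OF nb Lim_transform_eventually[OF A2 B2]] by simp
      then show ?thesis using gamma_pos True by simp
    next
      case False
      then have "rho0 l x = 0" using rho0_nn[OF l, of x] by simp
      then show ?thesis by (rule pd_min[OF smooth_diff[OF smR(1)[OF l]] rho0_nn[OF l]])
    qed
  qed
  have "\<forall>l\<in>I. \<exists>c. \<forall>y. rho0 l y = c"
    using const_from_pd0[OF smooth_diff[OF smR(1)] pdR0] by blast
  then obtain c where c: "\<And>l y. l \<in> I \<Longrightarrow> rho0 l y = c l" by metis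
  have dive_u0: "\<And>l x. l \<in> I \<Longrightarrow> dive (u0 l) x = (\<Sum>i\<in>UNIV. pd i (u0 l) x $ i)"
    unfolding dive_def using smU(1) by (simp add: pd_nth smooth_diff)
  have DVc: "\<And>l x. l \<in> I \<Longrightarrow> DV l x = c l * dive (u0 l) x"
    unfolding DV_def by (simp add: dive_u0 pdR0 c sum_distrib_left)
  have climit: "\<And>k x. k \<in> I \<Longrightarrow> c k = P - \<Delta>t * (\<Sum>l\<in>{1..k}. A k l * DV l x)"
  proof -
    fix k x assume k: "k \<in> I"
    have sub: "l \<in> I" if "l \<in> {1..k}" for l using that k by (auto simp: I_def)
    have A2: "((\<lambda>\<epsilon>. (\<rho>n0 x + \<epsilon>\<^sup>2 * \<rho>n2 x) - \<Delta>t * (\<Sum>l\<in>{1..k}. A k l * dive (q \<epsilon> l) x))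
        \<longlongrightarrow> (P + 0\<^sup>2 * \<rho>n2 x) - \<Delta>t * (\<Sum>l\<in>{1..k}. A k l * DV l x)) (at_right 0)"
      unfolding P using sub by (intro tendsto_intros e0 DVlim) auto
    have B2: "\<forall>\<^sub>F \<epsilon> in at_right 0. (\<rho>n0 x + \<epsilon>\<^sup>2 * \<rho>n2 x) - \<Delta>t * (\<Sum>l\<in>{1..k}. A k l * dive (q \<epsilon> l) x) = rho \<epsilon> k x"
      using RHOEQ by (rule eventually_mono) (use k in auto)
    have "c k = (P + 0\<^sup>2 * \<rho>n2 x) - \<Delta>t * (\<Sum>l\<in>{1..k}. A k l * DV l x)"
      using tendsto_unique[OF nb Lim_transform_eventually[OF A2 B2] Rlim[OF k, of x]] c[OF k] by simp
    then show "c k = P - \<Delta>t * (\<Sum>l\<in>{1..k}. A k l * DV l x)" by simp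
  qed
  define Z where "Z l x = c l * dive (u0 l) x" for l x
  have sysE: "\<And>k x. k \<in> I \<Longrightarrow> (\<Sum>l\<in>I. A k l * Z l x) = (P - c k) / \<Delta>t"
  proof -
    fix k x assume k: "k \<in> I"
    have "(\<Sum>l\<in>{1..k}. A k l * DV l x) = (\<Sum>l\<in>I. A k l * DV l x)"
    proof (rule sum.mono_neutral_left[OF finI])
      show "{1..k} \<subseteq> I" using k by (auto simp: I_def)
      show "\<forall>l\<in>I - {1..k}. A k l * DV l x = 0" using Az k by (auto simp: I_def)
    qed
    also have "\<dots> = (\<Sum>l\<in>I. A k l * Z l x)" by (intro sum.cong refl) (simp add: DVc Z_def)
    finally show "(\<Sum>l\<in>I. A k l * Z l x) = (P - c k) / \<Delta>t"
      using climit[OF k, of x] dt0 by (simp add: field_simps)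
  qed
  have Zconst: "\<And>l K. l \<in> I \<Longrightarrow> (\<And>x. Z l x = K) \<Longrightarrow> K = 0"
  proof -
    fix l K assume l: "l \<in> I" and ZK: "\<And>x. Z l x = K"
    show "K = 0"
    proof (cases "c l = 0")
      case True then show ?thesis using ZK[of 0] by (simp add: Z_def)
    next
      case False
      have dK: "dive (u0 l) x = K / c l" for x using ZK[of x] False by (simp add: Z_def field_simps)
      have cont: "continuous_on UNIV (\<lambda>y. pd i (\<lambda>z. u0 l z $ i) y)" for i
      proof -
        have "continuous_on UNIV (pd i (u0 l))"
          using smooth_pd_diff[OF smU(1)[OF l]] by (intro differentiable_imp_continuous_on) (auto simp: differentiable_on_def)
        then have "continuous_on UNIV (\<lambda>y. pd i (u0 l) y $ i)" by (rule continuous_on_component)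
        moreover have "(\<lambda>y. pd i (\<lambda>z. u0 l z $ i) y) = (\<lambda>y. pd i (u0 l) y $ i)"
          using smooth_diff[OF smU(1)[OF l]] by (simp add: pd_nth)
        ultimately show ?thesis by simp
      qed
      have per: "periodic_torus (u0 l)" using coeff_periodic l by (auto simp: I_def)
      have "K / c l = 0" by (rule div_const_zero[OF smooth_diff[OF smU(1)[OF l]] cont per dK])
      then show ?thesis using False by simp
    qed
  qed
  have Z0: "\<forall>l\<in>I. \<forall>x. Z l x = 0"
    using scheme_type
  proof
    assume tA: "type_A s A"
    obtain B where B: "\<forall>i\<in>I. \<forall>j\<in>I. (\<Sum>l\<in>I. B i l * A l j) = (if i = j then 1 else 0)"
      using tA unfolding type_A_def invertible_block_def I_def by blast
    show ?thesis
    proof (intro ballI allI)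
      fix l x assume l: "l \<in> I"
      have eq: "Z l y = (\<Sum>k\<in>I. B l k *\<^sub>R ((P - c k) / \<Delta>t))" for y
        by (rule inv_apply[OF B finI _ l]) (use sysE in simp)
      have "(\<Sum>k\<in>I. B l k *\<^sub>R ((P - c k) / \<Delta>t)) = 0" by (rule Zconst[OF l eq])
      then show "Z l x = 0" using eq by simp
    qed
  next
    assume tC: "type_CK s A"
    then have s2: "s \<ge> 2" and A1: "\<And>j. j \<in> I \<Longrightarrow> A 1 j = 0" and At1: "\<And>j. j \<in> I \<Longrightarrow> At 1 j = 0"
      using Atz by (auto simp: type_CK_def I_def)
    define J where "J = {2..s}"
    have finJ: "finite J" by (simp add: J_def)
    have IJ: "I = insert 1 J" "1 \<notin> J" using s2 by (auto simp: I_def J_def)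
    have oneI: "1 \<in> I" using IJ by simp
    obtain B where B: "\<forall>i\<in>J. \<forall>j\<in>J. (\<Sum>l\<in>J. B i l * A l j) = (if i = j then 1 else 0)"
      using tC unfolding type_CK_def invertible_block_def J_def by blast
    have u01: "u0 1 y = un0 y" for y
    proof -
      have U1: "\<forall>\<^sub>F \<epsilon> in at_right 0. un0 y + \<epsilon> *\<^sub>R un1 y = U 1 \<epsilon> y"
        using RHOEQ QEQ POS
      proof eventually_elim
        case (elim \<epsilon>)
        have r: "rho \<epsilon> 1 y = \<rho>n0 y + \<epsilon>\<^sup>2 * \<rho>n2 y" using elim(1) oneI A1 by auto
        have qq: "q \<epsilon> 1 y = (\<rho>n0 y + \<epsilon>\<^sup>2 * \<rho>n2 y) *\<^sub>R (un0 y + \<epsilon> *\<^sub>R un1 y)"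
          using elim(2) oneI A1 by auto
        have "rho \<epsilon> 1 y > 0" using elim(3) oneI by blast
        then show ?case using r qq by (simp add: U_def)
      qed
      have "((\<lambda>\<epsilon>. un0 y + \<epsilon> *\<^sub>R un1 y) \<longlongrightarrow> un0 y + 0 *\<^sub>R un1 y) (at_right 0)"
        by (intro tendsto_intros e0)
      then have "((\<lambda>\<epsilon>. un0 y + \<epsilon> *\<^sub>R un1 y) \<longlongrightarrow> un0 y) (at_right 0)" by simp
      then have "((\<lambda>\<epsilon>. U 1 \<epsilon> y) \<longlongrightarrow> un0 y) (at_right 0)"
        by (rule Lim_transform_eventually[OF _ U1])
      moreover have "((\<lambda>\<epsilon>. U 1 \<epsilon> y) \<longlongrightarrow> u0 1 y) (at_right 0)"
        using exp_val[OF expU[OF oneI] smU(1)[OF oneI] smU(2)[OF oneI] smU(3)[OF oneI]] .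
      ultimately show "u0 1 y = un0 y" using tendsto_unique[OF nb] by blast
    qed
    have Z1: "Z 1 y = 0" for y
    proof -
      have "u0 1 = un0" using u01 by (simp add: fun_eq_iff)
      then show ?thesis using div_u_n0 by (simp add: Z_def)
    qed
    show ?thesis
    proof (intro ballI allI)
      fix l x assume l: "l \<in> I"
      show "Z l x = 0"
      proof (cases "l = 1")
        case True then show ?thesis using Z1 by simp
      next
        case False
        then have lJ: "l \<in> J" using l IJ by auto
        have eq: "Z l y = (\<Sum>k\<in>J. B l k *\<^sub>R ((P - c k) / \<Delta>t))" for y
        proof (rule inv_apply[OF B finJ _ lJ])
          show "\<forall>k\<in>J. (\<Sum>l\<in>J. A k l *\<^sub>R Z l y) = (P - c k) / \<Delta>t"
          proof
            fix k assume k: "k \<in> J"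
            then have kI: "k \<in> I" using IJ by auto
            have "(\<Sum>l\<in>I. A k l * Z l y) = A k 1 * Z 1 y + (\<Sum>l\<in>J. A k l * Z l y)"
              unfolding IJ(1) using IJ(2) finJ by simp
            then show "(\<Sum>l\<in>J. A k l *\<^sub>R Z l y) = (P - c k) / \<Delta>t"
              using sysE[OF kI, of y] Z1 by simp
          qed
        qed
        have "(\<Sum>k\<in>J. B l k *\<^sub>R ((P - c k) / \<Delta>t)) = 0" by (rule Zconst[OF l eq])
        then show "Z l x = 0" using eq by simp
      qed
    qed
  qed
  have cP: "\<And>k. k \<in> I \<Longrightarrow> c k = P"
  proof -
    fix k assume k: "k \<in> I"
    have "(P - c k) / \<Delta>t = 0" using sysE[OF k, of 0] Z0 by simp
    then show "c k = P" using dt0 by simp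
  qed
  have divu0: "\<And>l x. l \<in> I \<Longrightarrow> dive (u0 l) x = 0"
    using Z0 cP P0 by (auto simp: Z_def)
  have pdR1: "\<And>l x i. l \<in> I \<Longrightarrow> pd i (rho1 l) x = 0"
  proof -
    fix l x i assume l: "l \<in> I"
    have A2: "((\<lambda>\<epsilon>. \<gamma> * rho \<epsilon> l x powr (\<gamma> - 1) * ((1/\<epsilon>) *\<^sub>R pd i (rho \<epsilon> l) x)) \<longlongrightarrow> \<gamma> * rho0 l x powr (\<gamma> - 1) * pd i (rho1 l) x) (at_right 0)"
      using l c cP P0 by (intro tendsto_intros Rlim exp_pd1[OF expR smR(1) smR(2) smR(3) pdR0]) auto
    have B2: "\<forall>\<^sub>F \<epsilon> in at_right 0. \<gamma> * rho \<epsilon> l x powr (\<gamma> - 1) * ((1/\<epsilon>) *\<^sub>R pd i (rho \<epsilon> l) x) = ((1/\<epsilon>) *\<^sub>R G l \<epsilon> x) $ i"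
      using Gcomp by (rule eventually_mono) (use l in auto)
    have "((\<lambda>\<epsilon>. ((1/\<epsilon>) *\<^sub>R G l \<epsilon> x) $ i) \<longlongrightarrow> 0 $ i) (at_right 0)" by (rule tendsto_vec_nth[OF G1[OF l]])
    then have "\<gamma> * rho0 l x powr (\<gamma> - 1) * pd i (rho1 l) x = 0"
      using tendsto_unique[OF nb Lim_transform_eventually[OF A2 B2]] by simp
    then show "pd i (rho1 l) x = 0" using gamma_pos c[OF l] cP[OF l] P0 by simp
  qed
  have "\<forall>l\<in>I. \<exists>d. \<forall>y. rho1 l y = d"
    using const_from_pd0[OF smooth_diff[OF smR(2)] pdR1] by blast
  then obtain d where d: "\<And>l y. l \<in> I \<Longrightarrow> rho1 l y = d l" by metis
  define Gl2 where "Gl2 l x = (\<chi> i. \<gamma> * P powr (\<gamma> - 1) * pd i (rho2 l) x)" for l x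
  have G2lim: "\<And>l x. l \<in> I \<Longrightarrow> ((\<lambda>\<epsilon>. (1/\<epsilon>\<^sup>2) *\<^sub>R G l \<epsilon> x) \<longlongrightarrow> Gl2 l x) (at_right 0)"
  proof -
    fix l x assume l: "l \<in> I"
    show "((\<lambda>\<epsilon>. (1/\<epsilon>\<^sup>2) *\<^sub>R G l \<epsilon> x) \<longlongrightarrow> Gl2 l x) (at_right 0)"
    proof (rule vec_tendstoI)
      fix i
      have A2: "((\<lambda>\<epsilon>. \<gamma> * rho \<epsilon> l x powr (\<gamma> - 1) * ((1/\<epsilon>\<^sup>2) *\<^sub>R pd i (rho \<epsilon> l) x)) \<longlongrightarrow> \<gamma> * rho0 l x powr (\<gamma> - 1) * pd i (rho2 l) x) (at_right 0)"
        using l c cP P0 by (intro tendsto_intros Rlim exp_pd2[OF expR smR(1) smR(2) smR(3) pdR0 pdR1]) auto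
      have B2: "\<forall>\<^sub>F \<epsilon> in at_right 0. \<gamma> * rho \<epsilon> l x powr (\<gamma> - 1) * ((1/\<epsilon>\<^sup>2) *\<^sub>R pd i (rho \<epsilon> l) x) = ((1/\<epsilon>\<^sup>2) *\<^sub>R G l \<epsilon> x) $ i"
        using Gcomp by (rule eventually_mono) (use l in auto)
      show "((\<lambda>\<epsilon>. ((1/\<epsilon>\<^sup>2) *\<^sub>R G l \<epsilon> x) $ i) \<longlongrightarrow> Gl2 l x $ i) (at_right 0)"
        using Lim_transform_eventually[OF A2 B2] c[OF l] cP[OF l] by (simp add: Gl2_def)
    qed
  qed
  have YW: "\<And>x. (1/\<Delta>t) *\<^sub>R Y0 s x = (\<Sum>l\<in>I. A s l *\<^sub>R Gl2 l x)"
  proof -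
    fix x
    have "((\<lambda>\<epsilon>. \<Sum>l\<in>I. A s l *\<^sub>R ((1/\<epsilon>\<^sup>2) *\<^sub>R G l \<epsilon> x)) \<longlongrightarrow> (\<Sum>l\<in>I. A s l *\<^sub>R Gl2 l x)) (at_right 0)"
      by (intro tendsto_sum tendsto_scaleR tendsto_const G2lim)
    moreover have "(\<lambda>\<epsilon>. \<Sum>l\<in>I. A s l *\<^sub>R ((1/\<epsilon>\<^sup>2) *\<^sub>R G l \<epsilon> x)) = (\<lambda>\<epsilon>. (1/\<epsilon>\<^sup>2) *\<^sub>R H s \<epsilon> x)"
      using Hsum[OF sI] by (simp add: scaleR_sum_right)
    ultimately have "((\<lambda>\<epsilon>. (1/\<epsilon>\<^sup>2) *\<^sub>R H s \<epsilon> x) \<longlongrightarrow> (\<Sum>l\<in>I. A s l *\<^sub>R Gl2 l x)) (at_right 0)"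
      by simp
    then show "(1/\<Delta>t) *\<^sub>R Y0 s x = (\<Sum>l\<in>I. A s l *\<^sub>R Gl2 l x)"
      by (rule tendsto_unique[OF nb Hlim[OF sI]])
  qed
  have gradp2: "\<And>l x. l \<in> I \<Longrightarrow> grad (\<lambda>y. pres2 \<gamma> (rho0 l y) (rho1 l y) (rho2 l y)) x = Gl2 l x"
  proof -
    fix l x assume l: "l \<in> I"
    define a where "a = \<gamma> * P powr (\<gamma> - 1)"
    define b where "b = \<gamma> * (\<gamma> - 1) / 2 * P powr (\<gamma> - 2) * (d l)\<^sup>2"
    have fe: "(\<lambda>y. pres2 \<gamma> (rho0 l y) (rho1 l y) (rho2 l y)) = (\<lambda>y. a * rho2 l y + b)"
      using c[OF l] cP[OF l] d[OF l] by (simp add: pres2_def a_def b_def fun_eq_iff)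
    have dr: "rho2 l differentiable at x" using smooth_diff[OF smR(3)[OF l]] .
    have "pd i (\<lambda>y. a * rho2 l y + b) x = a * pd i (rho2 l) x" for i
      using dr by (simp add: pd_add pd_cmult pd_const differentiable_mult differentiable_const)
    then show "grad (\<lambda>y. pres2 \<gamma> (rho0 l y) (rho1 l y) (rho2 l y)) x = Gl2 l x"
      by (simp add: grad_def fe Gl2_def a_def)
  qed
  have DT0eq: "\<And>l x. l \<in> I \<Longrightarrow> DT0 l x = P *\<^sub>R divT (\<lambda>y. otimes (u0 l y) (u0 l y)) x"
  proof -
    fix l x assume l: "l \<in> I"
    have du: "u0 l differentiable at y" for y using smooth_diff[OF smU(1)[OF l]] .
    show "DT0 l x = P *\<^sub>R divT (\<lambda>y. otimes (u0 l y) (u0 l y)) x"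
      unfolding DT0_def divT_def otimes_def
      by (simp add: vec_eq_iff pdR0[OF l] c[OF l] cP[OF l] sum_distrib_left
          pd_mult[OF diff_nth[OF du] diff_nth[OF du]] pd_nth[OF du])
  qed
  have ss: "{1..s} = insert s {1..s-1}" "s \<notin> {1..s-1}" using s1 by auto
  have wts: "wt s = 0" using Atz[OF sI sI] wt_eq[OF sI] by simp
  define S where "S x = (\<Sum>k\<in>{1..s}. wt k *\<^sub>R divT (\<lambda>y. otimes (u0 k y) (u0 k y)) x)" for x
  define W where "W x = (\<Sum>k\<in>{1..s}. w k *\<^sub>R grad (\<lambda>y. pres2 \<gamma> (rho0 k y) (rho1 k y) (rho2 k y)) x)" for x
  have Seq: "\<And>x. (\<Sum>l\<in>{1..s-1}. At s l *\<^sub>R DT0 l x) = P *\<^sub>R S x"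
  proof -
    fix x
    have "S x = (\<Sum>k\<in>{1..s-1}. wt k *\<^sub>R divT (\<lambda>y. otimes (u0 k y) (u0 k y)) x)"
      unfolding S_def ss(1) using ss(2) wts by simp
    also have "P *\<^sub>R \<dots> = (\<Sum>l\<in>{1..s-1}. At s l *\<^sub>R DT0 l x)"
      unfolding scaleR_sum_right
    proof (rule sum.cong[OF refl])
      fix l assume "l \<in> {1..s-1}"
      then have l: "l \<in> I" using s1 by (auto simp: I_def)
      show "P *\<^sub>R wt l *\<^sub>R divT (\<lambda>y. otimes (u0 l y) (u0 l y)) x = At s l *\<^sub>R DT0 l x"
        using wt_eq[OF l] DT0eq[OF l] by simp
    qed
    finally show "(\<Sum>l\<in>{1..s-1}. At s l *\<^sub>R DT0 l x) = P *\<^sub>R S x" by simp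
  qed
  have Weq: "\<And>x. (1/\<Delta>t) *\<^sub>R Y0 s x = W x"
    unfolding YW W_def I_def using w_eq gradp2 by (intro sum.cong refl) (auto simp: I_def)
  have final: "\<And>x. u0 s x = un0 x - \<Delta>t *\<^sub>R S x - (\<Delta>t / \<rho>n0 x) *\<^sub>R W x"
  proof -
    fix x
    have "Y0 s x = \<Delta>t *\<^sub>R ((1/\<Delta>t) *\<^sub>R Y0 s x)" using dt0 by simp
    also have "\<dots> = \<Delta>t *\<^sub>R W x" using Weq[of x] by simp
    finally have "Y0 s x = \<Delta>t *\<^sub>R W x" .
    moreover have "Y0 s x = P *\<^sub>R un0 x - \<Delta>t *\<^sub>R (P *\<^sub>R S x) - P *\<^sub>R u0 s x"
      unfolding Y0_def Seq c[OF sI] cP[OF sI] ..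
    ultimately have "P *\<^sub>R u0 s x = P *\<^sub>R (un0 x - \<Delta>t *\<^sub>R S x - (\<Delta>t / P) *\<^sub>R W x)"
      using P0 by (simp add: algebra_simps)
    then show "u0 s x = un0 x - \<Delta>t *\<^sub>R S x - (\<Delta>t / \<rho>n0 x) *\<^sub>R W x"
      using P0 by (simp add: P)
  qed
  have upd: "\<forall>\<^sub>F \<epsilon> in at_right 0. rhoN \<epsilon> = rho \<epsilon> s \<and> qN \<epsilon> = q \<epsilon> s"
    using update RHOEQ QEQ
  proof eventually_elim
    case (elim \<epsilon>)
    have sumA: "(\<Sum>l\<in>{1..s}. A s l * f l) = (\<Sum>k\<in>{1..s}. w k * f k)" for f :: "nat \<Rightarrow> real"
      using w_eq by (intro sum.cong refl) (auto simp: I_def)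
    have sumA2: "(\<Sum>l\<in>{1..s}. A s l *\<^sub>R f l) = (\<Sum>k\<in>{1..s}. w k *\<^sub>R f k)" for f :: "nat \<Rightarrow> real^'d"
      using w_eq by (intro sum.cong refl) (auto simp: I_def)
    have sumAt: "(\<Sum>l\<in>{1..s-1}. At s l *\<^sub>R f l) = (\<Sum>k\<in>{1..s}. wt k *\<^sub>R f k)" for f :: "nat \<Rightarrow> real^'d"
    proof -
      have "(\<Sum>k\<in>{1..s}. wt k *\<^sub>R f k) = (\<Sum>k\<in>{1..s-1}. wt k *\<^sub>R f k)"
        unfolding ss(1) using ss(2) wts by simp
      also have "\<dots> = (\<Sum>l\<in>{1..s-1}. At s l *\<^sub>R f l)"
        using wt_eq s1 by (intro sum.cong refl) (auto simp: I_def)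
      finally show ?thesis by simp
    qed
    have "rhoN \<epsilon> x = rho \<epsilon> s x" for x
    proof -
      have "rho \<epsilon> s x = (\<rho>n0 x + \<epsilon>\<^sup>2 * \<rho>n2 x) - \<Delta>t * (\<Sum>l\<in>{1..s}. A s l * dive (q \<epsilon> l) x)"
        using elim(2) sI by blast
      moreover have "rhoN \<epsilon> x = (\<rho>n0 x + \<epsilon>\<^sup>2 * \<rho>n2 x) - \<Delta>t * (\<Sum>k\<in>{1..s}. w k * dive (q \<epsilon> k) x)"
        using elim(1) by blast
      ultimately show ?thesis by (simp only: sumA)
    qed
    moreover have "qN \<epsilon> x = q \<epsilon> s x" for x
    proof -
      have "q \<epsilon> s x = (\<rho>n0 x + \<epsilon>\<^sup>2 * \<rho>n2 x) *\<^sub>R (un0 x + \<epsilon> *\<^sub>R un1 x)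
           - \<Delta>t *\<^sub>R (\<Sum>l\<in>{1..s-1}. At s l *\<^sub>R
                divT (\<lambda>y i j. otimes (q \<epsilon> l y) (q \<epsilon> l y) i j / rho \<epsilon> l y) x)
           - (\<Delta>t / \<epsilon>\<^sup>2) *\<^sub>R (\<Sum>l\<in>{1..s}. A s l *\<^sub>R grad (\<lambda>y. pres \<gamma> (rho \<epsilon> l y)) x)"
        using elim(3) sI by blast
      moreover have "qN \<epsilon> x = (\<rho>n0 x + \<epsilon>\<^sup>2 * \<rho>n2 x) *\<^sub>R (un0 x + \<epsilon> *\<^sub>R un1 x)
           - \<Delta>t *\<^sub>R (\<Sum>k\<in>{1..s}. wt k *\<^sub>R
                divT (\<lambda>y i j. otimes (q \<epsilon> k y) (q \<epsilon> k y) i j / rho \<epsilon> k y) x)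
           - (\<Delta>t / \<epsilon>\<^sup>2) *\<^sub>R (\<Sum>k\<in>{1..s}. w k *\<^sub>R grad (\<lambda>y. pres \<gamma> (rho \<epsilon> k y)) x)"
        using elim(1) by blast
      ultimately show ?thesis by (simp only: sumA2 sumAt)
    qed
    ultimately show ?case by (simp add: fun_eq_iff)
  qed
  show ?thesis
  proof (intro conjI)
    show "\<forall>k\<in>{1..s}. (\<forall>x. rho0 k x = \<rho>n0 x) \<and> (\<exists>c. \<forall>x. rho1 k x = c) \<and> (\<forall>x. dive (u0 k) x = 0)"
      using c cP P d divu0 by (auto simp: I_def)
    show "\<forall>\<^sub>F \<epsilon> in at_right 0. rhoN \<epsilon> = rho \<epsilon> s \<and> qN \<epsilon> = q \<epsilon> s" by (rule upd)
    show "\<exists>c. \<forall>x. rho0 s x = c" using c[OF sI] by blast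
    show "\<forall>x. rho0 s x = \<rho>n0 x" using c[OF sI] cP[OF sI] P by simp
    show "\<forall>x. dive (u0 s) x = 0" using divu0[OF sI] by blast
    show "\<forall>x. u0 s x = un0 x
            - \<Delta>t *\<^sub>R (\<Sum>k\<in>{1..s}. wt k *\<^sub>R divT (\<lambda>y. otimes (u0 k y) (u0 k y)) x)
            - (\<Delta>t / \<rho>n0 x) *\<^sub>R (\<Sum>k\<in>{1..s}. w k *\<^sub>R
                 grad (\<lambda>y. pres2 \<gamma> (rho0 k y) (rho1 k y) (rho2 k y)) x)"
      using final by (simp add: S_def W_def)
  qed
qed
end
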